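(* In the setting below, suppose that the operator $K$ has a subinvariant density $f_*$ (i.e. $f_*\in D(m)$ and $Kf_*\le f_*$), and let \[ \overline{f}_*=\sup_{\lambda>0}R(\lambda,A)f_* \] (a pointwise a.e. monotone limit as $\lambda\downarrow0$). Then $\overline f_*$ is subinvariant for the semigroup $\{P(t)\}_{t\ge0}$. In particular, if $\overline f_*\in L^1$ and $\{P(t)\}_{t\ge0}$ is stochastic, then $\{P(t)\}_{t\ge0}$ has an invariant density.
   Context: Setting: $(E,\mathcal{E},m)$ is a $\sigma$-finite measure space, $L^1=L^1(E,\mathcal{E},m)$, $L^1_+$ its nonnegative elements, $D(m)=\{f\in L^1_+:\|f\|=1\}$ the densities. A linear operator on $L^1$ is stochastic if it maps $D(m)$ into $D(m)$, substochastic if it is a positive contraction; a (sub)stochastic semigroup is a $C_0$-semigroup of (sub)stochastic operators. A substochastic operator $Q$ is extended to nonnegative measurable $f=\sup_n f_n$ ($0\le f_n\uparrow$, $f_n\in L^1_+$) by $Qf=\sup_nQf_n$ (possibly $+\infty$); $f\ge0$ measurable is subinvariant (invariant) for $Q$ if $Qf\le f$ ($Qf=f$), and for a semigroup if this holds for each $P(t)$. Let $P$ be a stochastic operator on $L^1$, $\varphi\colon E\to[0,\infty)$ measurable, and $\{S(t)\}_{t\ge0}$ a substochastic semigroup with generator $(A,\mathcal{D}(A))$ such that $\mathcal{D}(A)\subseteq L^1_\varphi=\{f\in L^1:\int\varphi|f|\,dm<\infty\}$ and $\int_E Af\,dm=-\int_E\varphi f\,dm$ for all $f\in\mathcal{D}(A)\cap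 L^1_+$. $R(\lambda,A)=(\lambda-A)^{-1}=\int_0^\infty e^{-\lambda s}S(s)\,ds$ for $\lambda>0$. The minimal semigroup $\{P(t)\}_{t\ge0}$ is the substochastic semigroup whose generator $(\mathcal{C},\mathcal{D}(\mathcal{C}))$ is given by $R(\lambda,\mathcal{C})f=\lim_{n\to\infty}R(\lambda,A)\sum_{k=0}^n(P(\varphi R(\lambda,A)))^kf$ for $f\in L^1$, $\lambda>0$; it satisfies $\mathcal{D}(A)\subseteq\mathcal{D}(\mathcal{C})$ and $\mathcal{C}f=Af+P(\varphi f)$ for $f\in\mathcal{D}(A)$. The substochastic operator $K$ on $L^1$ is $Kf=\lim_{\lambda\downarrow0}P(\varphi R(\lambda,A))f$. *)

theory Defs
  imports "HOL-Analysis.Analysis"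
begin

text \<open>Elements of L^1(E,m) are represented by integrable real functions on the
measure space M; everything is understood up to M-a.e. equality. Operators on
L^1 are maps of type (a => real) => (a => real), required to respect a.e. equality.\<close>

definition l1norm :: "'a measure \<Rightarrow> ('a \<Rightarrow> real) \<Rightarrow> real" where
  "l1norm M f = (LINT x|M. \<bar>f x\<bar>)"

definition is_density :: "'a measure \<Rightarrow> ('a \<Rightarrow> real) \<Rightarrow> bool" where
  "is_density M f \<longleftrightarrow> integrable M f \<and> (AE x in M. 0 \<le> f x) \<and> integral\<^sup>L M f = 1"

definition l1_lim :: "'a measure \<Rightarrow> ('b \<Rightarrow> 'a \<Rightarrow> real) \<Rightarrow> ('a \<Rightarrow> real) \<Rightarrow> 'b filter \<Rightarrow> bool" where
  "l1_lim M g L F \<longleftrightarrow> integrable M L \<and> (\<forall>\<^sub>F t in F. integrable M (g t))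
     \<and> ((\<lambda>t. l1norm M (\<lambda>x. g t x - L x)) \<longlongrightarrow> 0) F"

definition substochastic_op :: "'a measure \<Rightarrow> (('a \<Rightarrow> real) \<Rightarrow> ('a \<Rightarrow> real)) \<Rightarrow> bool" where
  "substochastic_op M T \<longleftrightarrow>
     (\<forall>f. integrable M f \<longrightarrow> integrable M (T f)) \<and>
     (\<forall>f g. integrable M f \<longrightarrow> (AE x in M. f x = g x) \<longrightarrow> (AE x in M. T f x = T g x)) \<and>
     (\<forall>f g a b. integrable M f \<longrightarrow> integrable M g \<longrightarrow>
        (AE x in M. T (\<lambda>y. a * f y + b * g y) x = a * T f x + b * T g x)) \<and>
     (\<forall>f. integrable M f \<longrightarrow> (AE x in M. 0 \<le> f x) \<longrightarrow> (AE x in M. 0 \<le> T f x)) \<and>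
     (\<forall>f. integrable M f \<longrightarrow> l1norm M (T f) \<le> l1norm M f)"

definition stochastic_op :: "'a measure \<Rightarrow> (('a \<Rightarrow> real) \<Rightarrow> ('a \<Rightarrow> real)) \<Rightarrow> bool" where
  "stochastic_op M T \<longleftrightarrow> substochastic_op M T \<and> (\<forall>f. is_density M f \<longrightarrow> is_density M (T f))"

definition substochastic_sg :: "'a measure \<Rightarrow> (real \<Rightarrow> ('a \<Rightarrow> real) \<Rightarrow> ('a \<Rightarrow> real)) \<Rightarrow> bool" where
  "substochastic_sg M S \<longleftrightarrow>
     (\<forall>t\<ge>0. substochastic_op M (S t)) \<and>
     (\<forall>f. integrable M f \<longrightarrow> (AE x in M. S 0 f x = f x)) \<and>
     (\<forall>t s f. 0 \<le> t \<longrightarrow> 0 \<le> s \<longrightarrow> integrable M f \<longrightarrow> (AE x in M. S (t + s) f x = S t (S s f) x)) \<and>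
     (\<forall>f. integrable M f \<longrightarrow> ((\<lambda>t. l1norm M (\<lambda>x. S t f x - f x)) \<longlongrightarrow> 0) (at_right 0))"

definition stochastic_sg :: "'a measure \<Rightarrow> (real \<Rightarrow> ('a \<Rightarrow> real) \<Rightarrow> ('a \<Rightarrow> real)) \<Rightarrow> bool" where
  "stochastic_sg M S \<longleftrightarrow> substochastic_sg M S \<and> (\<forall>t\<ge>0. stochastic_op M (S t))"

text \<open>Generator: has_gen M S f g means f is in D(A) and A f = g.\<close>
definition has_gen :: "'a measure \<Rightarrow> (real \<Rightarrow> ('a \<Rightarrow> real) \<Rightarrow> ('a \<Rightarrow> real)) \<Rightarrow> ('a \<Rightarrow> real) \<Rightarrow> ('a \<Rightarrow> real) \<Rightarrow> bool" where
  "has_gen M S f g \<longleftrightarrow> integrable M f \<and> integrable M g \<and>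
     ((\<lambda>h. l1norm M (\<lambda>x. (S h f x - f x) / h - g x)) \<longlongrightarrow> 0) (at_right 0)"

text \<open>is_res M S l g f: f = R(l,A) g, i.e. f in D(A) and l f - A f = g.\<close>
definition is_res :: "'a measure \<Rightarrow> (real \<Rightarrow> ('a \<Rightarrow> real) \<Rightarrow> ('a \<Rightarrow> real)) \<Rightarrow> real \<Rightarrow> ('a \<Rightarrow> real) \<Rightarrow> ('a \<Rightarrow> real) \<Rightarrow> bool" where
  "is_res M S l g f \<longleftrightarrow> (\<exists>h. has_gen M S f h \<and> (AE x in M. l * f x - h x = g x))"

definition resolvent :: "'a measure \<Rightarrow> (real \<Rightarrow> ('a \<Rightarrow> real) \<Rightarrow> ('a \<Rightarrow> real)) \<Rightarrow> real \<Rightarrow> ('a \<Rightarrow> real) \<Rightarrow> ('a \<Rightarrow> real)" where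
  "resolvent M S l g = (SOME f. is_res M S l g f)"

definition approx_seq :: "'a measure \<Rightarrow> ('a \<Rightarrow> ennreal) \<Rightarrow> (nat \<Rightarrow> 'a \<Rightarrow> real) \<Rightarrow> bool" where
  "approx_seq M f fn \<longleftrightarrow>
     (\<forall>n. integrable M (fn n) \<and> (\<forall>x\<in>space M. 0 \<le> fn n x \<and> fn n x \<le> fn (Suc n) x)) \<and>
     (AE x in M. (SUP n. ennreal (fn n x)) = f x)"

definition ext_op :: "'a measure \<Rightarrow> (('a \<Rightarrow> real) \<Rightarrow> ('a \<Rightarrow> real)) \<Rightarrow> ('a \<Rightarrow> ennreal) \<Rightarrow> ('a \<Rightarrow> ennreal)" where
  "ext_op M T f = (\<lambda>x. SUP n. ennreal (T ((SOME fn. approx_seq M f fn) n) x))"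

definition subinvariant_sg :: "'a measure \<Rightarrow> (real \<Rightarrow> ('a \<Rightarrow> real) \<Rightarrow> ('a \<Rightarrow> real)) \<Rightarrow> ('a \<Rightarrow> ennreal) \<Rightarrow> bool" where
  "subinvariant_sg M P f \<longleftrightarrow> (\<forall>t\<ge>0. AE x in M. ext_op M (P t) f x \<le> f x)"

text \<open>sup over lambda>0 of R(lambda,A) f, realised as the a.e. monotone limit along lambda = 1/(n+1).\<close>
definition resolvent_sup :: "'a measure \<Rightarrow> (real \<Rightarrow> ('a \<Rightarrow> real) \<Rightarrow> ('a \<Rightarrow> real)) \<Rightarrow> ('a \<Rightarrow> real) \<Rightarrow> ('a \<Rightarrow> ennreal)" where
  "resolvent_sup M S f = (\<lambda>x. SUP n::nat. ennreal (resolvent M S (1 / real (Suc n)) f x))"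

end

theory Submission
  imports Defs
begin


section \<open>L1 toolkit\<close>

lemma l1norm_nonneg: "0 \<le> l1norm M f"
  unfolding l1norm_def by simp

lemma l1norm_triangle:
  assumes "integrable M f" "integrable M g"
  shows "l1norm M (\<lambda>x. f x + g x) \<le> l1norm M f + l1norm M g"
proof -
  have "(LINT x|M. \<bar>f x + g x\<bar>) \<le> (LINT x|M. \<bar>f x\<bar> + \<bar>g x\<bar>)"
    using assms by (intro integral_mono) (auto intro!: abs_triangle_ineq)
  also have "\<dots> = (LINT x|M. \<bar>f x\<bar>) + (LINT x|M. \<bar>g x\<bar>)"
    using assms by (intro Bochner_Integration.integral_add) auto
  finally show ?thesis unfolding l1norm_def .
qed

lemma l1norm_triangle3:
  assumes "integrable M f" "integrable M g" "integrable M h"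
  shows "l1norm M (\<lambda>x. f x - h x) \<le> l1norm M (\<lambda>x. f x - g x) + l1norm M (\<lambda>x. g x - h x)"
proof -
  have "l1norm M (\<lambda>x. f x - h x) = l1norm M (\<lambda>x. (f x - g x) + (g x - h x))" by simp
  also have "\<dots> \<le> l1norm M (\<lambda>x. f x - g x) + l1norm M (\<lambda>x. g x - h x)"
    using assms by (intro l1norm_triangle) auto
  finally show ?thesis .
qed

lemma l1norm_scale: "l1norm M (\<lambda>x. c * f x) = \<bar>c\<bar> * l1norm M f"
  unfolding l1norm_def by (simp add: abs_mult)

lemma l1norm_minus_commute: "l1norm M (\<lambda>x. f x - g x) = l1norm M (\<lambda>x. g x - f x)"
  unfolding l1norm_def by (simp add: abs_minus_commute)

lemma l1norm_cong:
  assumes "f \<in> borel_measurable M" "g \<in> borel_measurable M" "AE x in M. f x = g x"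
  shows "l1norm M f = l1norm M g"
  unfolding l1norm_def using assms by (intro integral_cong_AE) auto

lemma l1norm_mono:
  assumes "f \<in> borel_measurable M" "integrable M g" "AE x in M. \<bar>f x\<bar> \<le> \<bar>g x\<bar>"
  shows "l1norm M f \<le> l1norm M g"
proof -
  have "integrable M (\<lambda>x. \<bar>f x\<bar>)"
  proof (rule Bochner_Integration.integrable_bound[OF assms(2)])
    show "(\<lambda>x. \<bar>f x\<bar>) \<in> borel_measurable M" using assms(1) by measurable
    show "AE x in M. norm \<bar>f x\<bar> \<le> norm (g x)" using assms(3) by eventually_elim simp
  qed
  moreover have "integrable M (\<lambda>x. \<bar>g x\<bar>)" using assms(2) by simp
  ultimately show ?thesis unfolding l1norm_def using assms(3) by (rule integral_mono_AE)
qed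

lemma l1norm_zero:
  assumes "integrable M f" "l1norm M f = 0"
  shows "AE x in M. f x = 0"
proof -
  have "integrable M (\<lambda>x. \<bar>f x\<bar>)" using assms by simp
  then have "AE x in M. \<bar>f x\<bar> = 0"
    using assms unfolding l1norm_def using integral_nonneg_eq_0_iff_AE[of M "\<lambda>x. \<bar>f x\<bar>"] by simp
  then show ?thesis by simp
qed

lemma integral_le_l1norm:
  assumes "integrable M f"
  shows "integral\<^sup>L M f \<le> l1norm M f" "\<bar>integral\<^sup>L M f\<bar> \<le> l1norm M f"
proof -
  have "integral\<^sup>L M f \<le> (LINT x|M. \<bar>f x\<bar>)"
    using assms by (intro integral_mono) auto
  moreover have "\<bar>integral\<^sup>L M f\<bar> \<le> (LINT x|M. \<bar>f x\<bar>)"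
    using integral_norm_bound[of M f] by simp
  ultimately show "integral\<^sup>L M f \<le> l1norm M f" "\<bar>integral\<^sup>L M f\<bar> \<le> l1norm M f"
    unfolding l1norm_def by auto
qed

lemma ae_le_small:
  assumes v: "integrable M v"
    and small: "\<And>e. e > 0 \<Longrightarrow> \<exists>w. integrable M w \<and> (AE x in M. v x \<le> w x) \<and> l1norm M w < e"
  shows "AE x in M. v x \<le> 0"
proof -
  have iv: "integrable M (\<lambda>x. max (v x) 0)" using v by auto
  have le: "(LINT x|M. max (v x) 0) \<le> e" if e: "e > 0" for e
  proof -
    obtain w where w: "integrable M w" "AE x in M. v x \<le> w x" "l1norm M w < e"
      using small[OF e] by blast
    have "(LINT x|M. max (v x) 0) \<le> (LINT x|M. \<bar>w x\<bar>)"
      using iv w(1) by (intro integral_mono_AE) (use w(2) in \<open>auto elim!: eventually_mono\<close>)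
    then show ?thesis using w unfolding l1norm_def by simp
  qed
  have "(LINT x|M. max (v x) 0) \<le> 0"
  proof (rule field_le_epsilon)
    fix e :: real assume "e > 0" then show "(LINT x|M. max (v x) 0) \<le> 0 + e" using le by simp
  qed
  moreover have "0 \<le> (LINT x|M. max (v x) 0)" by simp
  ultimately have "(LINT x|M. max (v x) 0) = 0" by simp
  then have "AE x in M. max (v x) 0 = 0"
    using iv integral_nonneg_eq_0_iff_AE[of M "\<lambda>x. max (v x) 0"] by simp
  then show ?thesis by eventually_elim linarith
qed

lemma ae_eq_small:
  assumes v: "integrable M v"
    and small: "\<And>e. e > 0 \<Longrightarrow> l1norm M v < e"
  shows "AE x in M. v x = 0"
proof -
  have "l1norm M v \<le> 0"
  proof (rule field_le_epsilon)
    fix e :: real assume "e > 0" then show "l1norm M v \<le> 0 + e" using small[of e] by simp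
  qed
  then have "l1norm M v = 0" using l1norm_nonneg[of M v] by simp
  then show ?thesis using l1norm_zero v by blast
qed

section \<open>Substochastic operators\<close>

context
  fixes M :: "'a measure" and T :: "('a \<Rightarrow> real) \<Rightarrow> ('a \<Rightarrow> real)"
  assumes T: "substochastic_op M T"
begin

lemma T_1: "\<forall>f. integrable M f \<longrightarrow> integrable M (T f)"
  using T unfolding substochastic_op_def by (elim conjE) assumption

lemma T_2: "\<forall>f g. integrable M f \<longrightarrow> (AE x in M. f x = g x) \<longrightarrow> (AE x in M. T f x = T g x)"
  using T unfolding substochastic_op_def by (elim conjE) assumption

lemma T_3: "\<forall>f g a b. integrable M f \<longrightarrow> integrable M g \<longrightarrow>
        (AE x in M. T (\<lambda>y. a * f y + b * g y) x = a * T f x + b * T g x)"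
  using T unfolding substochastic_op_def by (elim conjE) assumption

lemma T_4: "\<forall>f. integrable M f \<longrightarrow> (AE x in M. 0 \<le> f x) \<longrightarrow> (AE x in M. 0 \<le> T f x)"
  using T unfolding substochastic_op_def by (elim conjE) assumption

lemma T_5: "\<forall>f. integrable M f \<longrightarrow> l1norm M (T f) \<le> l1norm M f"
  using T unfolding substochastic_op_def by (elim conjE) assumption



lemma op_int: "integrable M f \<Longrightarrow> integrable M (T f)"
  using T_1 by blast

lemma op_cong: "integrable M f \<Longrightarrow> AE x in M. f x = g x \<Longrightarrow> AE x in M. T f x = T g x"
  using T_2 by blast

lemma op_lin: "integrable M f \<Longrightarrow> integrable M g \<Longrightarrow>
   AE x in M. T (\<lambda>y. a * f y + b * g y) x = a * T f x + b * T g x"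
  using T_3 by blast

lemma op_pos: "integrable M f \<Longrightarrow> AE x in M. 0 \<le> f x \<Longrightarrow> AE x in M. 0 \<le> T f x"
  using T_4 by blast

lemma op_contr: "integrable M f \<Longrightarrow> l1norm M (T f) \<le> l1norm M f"
  using T_5 by blast

lemma op_lin':
  assumes "integrable M f" "integrable M g"
  shows "AE x in M. T (\<lambda>y. a * f y + b * g y) x = a * T f x + b * T g x"
  using op_lin assms by blast

lemma op_add:
  assumes "integrable M f" "integrable M g"
  shows "AE x in M. T (\<lambda>y. f y + g y) x = T f x + T g x"
  using op_lin[OF assms, of 1 1] by simp

lemma op_diff:
  assumes "integrable M f" "integrable M g"
  shows "AE x in M. T (\<lambda>y. f y - g y) x = T f x - T g x"
  using op_lin[OF assms, of 1 "-1"] by simp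

lemma op_scale:
  assumes "integrable M f"
  shows "AE x in M. T (\<lambda>y. a * f y) x = a * T f x"
  using op_lin[OF assms assms, of a 0] by simp

lemma op_mono:
  assumes "integrable M f" "integrable M g" "AE x in M. f x \<le> g x"
  shows "AE x in M. T f x \<le> T g x"
proof -
  have "AE x in M. 0 \<le> T (\<lambda>y. g y - f y) x"
    using assms(1,2) by (intro op_pos) (use assms(3) in \<open>auto elim!: eventually_mono\<close>)
  with op_diff[OF assms(2,1)] show ?thesis by eventually_elim auto
qed

lemma op_diff_norm:
  assumes "integrable M f" "integrable M g"
  shows "l1norm M (\<lambda>x. T f x - T g x) \<le> l1norm M (\<lambda>x. f x - g x)"
proof -
  have "l1norm M (\<lambda>x. T f x - T g x) = l1norm M (T (\<lambda>y. f y - g y))"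
  proof (rule l1norm_cong)
    show "(\<lambda>x. T f x - T g x) \<in> borel_measurable M" using op_int[OF assms(1)] op_int[OF assms(2)] by auto
    show "T (\<lambda>y. f y - g y) \<in> borel_measurable M" using op_int[of "\<lambda>y. f y - g y"] assms by auto
    show "AE x in M. T f x - T g x = T (\<lambda>y. f y - g y) x" using op_diff[OF assms] by eventually_elim simp
  qed
  also have "\<dots> \<le> l1norm M (\<lambda>x. f x - g x)"
    using assms by (intro op_contr) auto
  finally show ?thesis .
qed

lemma op_l1_lim:
  assumes "l1_lim M u L F"
  shows "l1_lim M (\<lambda>t. T (u t)) (T L) F"
proof -
  have L: "integrable M L" and ev: "\<forall>\<^sub>F t in F. integrable M (u t)"
    and lim: "((\<lambda>t. l1norm M (\<lambda>x. u t x - L x)) \<longlongrightarrow> 0) F"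
    using assms unfolding l1_lim_def by auto
  have "\<forall>\<^sub>F t in F. integrable M (T (u t))" using ev by eventually_elim (rule op_int)
  moreover have "((\<lambda>t. l1norm M (\<lambda>x. T (u t) x - T L x)) \<longlongrightarrow> 0) F"
  proof (rule tendsto_sandwich[OF _ _ tendsto_const lim])
    show "\<forall>\<^sub>F n in F. 0 \<le> l1norm M (\<lambda>x. T (u n) x - T L x)" by (simp add: l1norm_nonneg)
    show "\<forall>\<^sub>F n in F. l1norm M (\<lambda>x. T (u n) x - T L x) \<le> l1norm M (\<lambda>x. u n x - L x)"
      using ev by eventually_elim (rule op_diff_norm[OF _ L])
  qed
  ultimately show ?thesis using L op_int unfolding l1_lim_def by auto
qed

end



lemma l1norm_nn:
  assumes "integrable M f"
  shows "(\<integral>\<^sup>+x. ennreal \<bar>f x\<bar> \<partial>M) = ennreal (l1norm M f)"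
  unfolding l1norm_def using assms by (intro nn_integral_eq_integral) auto

lemma l1_limD:
  assumes "l1_lim M u L F"
  shows "integrable M L" "\<forall>\<^sub>F t in F. integrable M (u t)"
    "((\<lambda>t. l1norm M (\<lambda>x. u t x - L x)) \<longlongrightarrow> 0) F"
  using assms unfolding l1_lim_def by auto

lemma l1_limI:
  assumes "integrable M L" "\<forall>\<^sub>F t in F. integrable M (u t)"
    "((\<lambda>t. l1norm M (\<lambda>x. u t x - L x)) \<longlongrightarrow> 0) F"
  shows "l1_lim M u L F"
  using assms unfolding l1_lim_def by auto

lemma l1_lim_small:
  assumes "l1_lim M u L F" "e > 0"
  shows "\<forall>\<^sub>F t in F. integrable M (u t) \<and> l1norm M (\<lambda>x. u t x - L x) < e"
proof -
  have "\<forall>\<^sub>F t in F. l1norm M (\<lambda>x. u t x - L x) < e"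
    using order_tendstoD(2)[OF l1_limD(3)[OF assms(1)] assms(2)] .
  with l1_limD(2)[OF assms(1)] show ?thesis by (rule eventually_conj)
qed

lemma l1_lim_const: "integrable M g \<Longrightarrow> l1_lim M (\<lambda>t. g) g F"
  unfolding l1_lim_def l1norm_def by simp

lemma l1_lim_le_gen:
  assumes F: "F \<noteq> bot" and u: "l1_lim M u L F" and w: "l1_lim M w W F"
    and le: "\<forall>\<^sub>F t in F. AE x in M. u t x \<le> w t x"
  shows "AE x in M. L x \<le> W x"
proof -
  have LW: "integrable M L" "integrable M W" using u w by (auto dest: l1_limD)
  have "AE x in M. L x - W x \<le> 0"
  proof (rule ae_le_small)
    show "integrable M (\<lambda>x. L x - W x)" using LW by auto
    fix e :: real assume e: "e > 0"
    have "\<forall>\<^sub>F t in F. (integrable M (u t) \<and> l1norm M (\<lambda>x. u t x - L x) < e/2) \<and>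
        (integrable M (w t) \<and> l1norm M (\<lambda>x. w t x - W x) < e/2) \<and> (AE x in M. u t x \<le> w t x)"
      using l1_lim_small[OF u half_gt_zero[OF e]] l1_lim_small[OF w half_gt_zero[OF e]] le
      by eventually_elim auto
    then obtain t where t: "integrable M (u t)" "l1norm M (\<lambda>x. u t x - L x) < e/2"
      "integrable M (w t)" "l1norm M (\<lambda>x. w t x - W x) < e/2" "AE x in M. u t x \<le> w t x"
      using eventually_happens'[OF F] by blast
    define v where "v x = (L x - u t x) + (w t x - W x)" for x
    have "integrable M v" unfolding v_def using t LW by auto
    moreover have "AE x in M. L x - W x \<le> v x" using t(5) unfolding v_def by eventually_elim simp
    moreover have "l1norm M v < e"
    proof -
      have "l1norm M v \<le> l1norm M (\<lambda>x. L x - u t x) + l1norm M (\<lambda>x. w t x - W x)"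
        unfolding v_def using t LW by (intro l1norm_triangle) auto
      also have "\<dots> < e" using t l1norm_minus_commute[of M L "u t"] by simp
      finally show ?thesis .
    qed
    ultimately show "\<exists>w. integrable M w \<and> (AE x in M. L x - W x \<le> w x) \<and> l1norm M w < e" by blast
  qed
  then show ?thesis by eventually_elim simp
qed

lemma l1_lim_le_const:
  assumes F: "F \<noteq> bot" and u: "l1_lim M u L F" and g: "integrable M g"
    and le: "\<forall>\<^sub>F t in F. AE x in M. u t x \<le> g x"
  shows "AE x in M. L x \<le> g x"
  using l1_lim_le_gen[OF F u l1_lim_const[OF g] le] .

lemma l1_lim_ge_const:
  assumes F: "F \<noteq> bot" and u: "l1_lim M u L F" and g: "integrable M g"
    and le: "\<forall>\<^sub>F t in F. AE x in M. g x \<le> u t x"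
  shows "AE x in M. g x \<le> L x"
  using l1_lim_le_gen[OF F l1_lim_const[OF g] u le] .

lemma l1_lim_unique:
  assumes F: "F \<noteq> bot" and u: "l1_lim M u L F" and u': "l1_lim M u L' F"
  shows "AE x in M. L x = L' x"
proof -
  have "\<forall>\<^sub>F t in F. AE x in M. u t x \<le> u t x" by simp
  from l1_lim_le_gen[OF F u u' this] l1_lim_le_gen[OF F u' u this] show ?thesis by eventually_elim auto
qed

lemma l1_lim_cong:
  assumes u: "l1_lim M u L F" and L': "integrable M L'" and eq: "AE x in M. L x = L' x"
    and ev: "\<forall>\<^sub>F t in F. integrable M (v t) \<and> (AE x in M. u t x = v t x)"
  shows "l1_lim M v L' F"
proof (rule l1_limI[OF L'])
  show "\<forall>\<^sub>F t in F. integrable M (v t)" using ev by (auto elim: eventually_mono)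
  have "\<forall>\<^sub>F t in F. l1norm M (\<lambda>x. v t x - L' x) = l1norm M (\<lambda>x. u t x - L x)"
    using ev l1_limD(2)[OF u]
  proof eventually_elim
    case (elim t)
    show ?case
    proof (rule l1norm_cong)
      show "(\<lambda>x. v t x - L' x) \<in> borel_measurable M" using elim L' by auto
      show "(\<lambda>x. u t x - L x) \<in> borel_measurable M" using elim l1_limD(1)[OF u] by auto
      from elim have "AE x in M. u t x = v t x" by simp
      with eq show "AE x in M. v t x - L' x = u t x - L x" by eventually_elim simp
    qed
  qed
  then have "\<forall>\<^sub>F t in F. l1norm M (\<lambda>x. u t x - L x) = l1norm M (\<lambda>x. v t x - L' x)"
    by (auto elim: eventually_mono)
  then show "((\<lambda>t. l1norm M (\<lambda>x. v t x - L' x)) \<longlongrightarrow> 0) F"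
    by (rule Lim_transform_eventually[OF l1_limD(3)[OF u]])
qed

lemma l1_lim_lin:
  assumes u: "l1_lim M u L F" and v: "l1_lim M v L' F"
  shows "l1_lim M (\<lambda>t x. a * u t x + b * v t x) (\<lambda>x. a * L x + b * L' x) F"
proof (rule l1_limI)
  note L = l1_limD(1)[OF u] l1_limD(1)[OF v]
  show "integrable M (\<lambda>x. a * L x + b * L' x)" using L by auto
  show "\<forall>\<^sub>F t in F. integrable M (\<lambda>x. a * u t x + b * v t x)"
    using l1_limD(2)[OF u] l1_limD(2)[OF v] by eventually_elim auto
  show "((\<lambda>t. l1norm M (\<lambda>x. a * u t x + b * v t x - (a * L x + b * L' x))) \<longlongrightarrow> 0) F"
  proof (rule tendsto_sandwich[OF _ _ tendsto_const])
    show "\<forall>\<^sub>F t in F. 0 \<le> l1norm M (\<lambda>x. a * u t x + b * v t x - (a * L x + b * L' x))"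
      by (simp add: l1norm_nonneg)
    show "\<forall>\<^sub>F t in F. l1norm M (\<lambda>x. a * u t x + b * v t x - (a * L x + b * L' x))
       \<le> \<bar>a\<bar> * l1norm M (\<lambda>x. u t x - L x) + \<bar>b\<bar> * l1norm M (\<lambda>x. v t x - L' x)"
      using l1_limD(2)[OF u] l1_limD(2)[OF v]
    proof eventually_elim
      case (elim t)
      have "l1norm M (\<lambda>x. a * u t x + b * v t x - (a * L x + b * L' x))
          = l1norm M (\<lambda>x. a * (u t x - L x) + b * (v t x - L' x))" by (simp add: algebra_simps)
      also have "\<dots> \<le> l1norm M (\<lambda>x. a * (u t x - L x)) + l1norm M (\<lambda>x. b * (v t x - L' x))"
        using elim L by (intro l1norm_triangle) auto
      also have "\<dots> = \<bar>a\<bar> * l1norm M (\<lambda>x. u t x - L x) + \<bar>b\<bar> * l1norm M (\<lambda>x. v t x - L' x)"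
        using l1norm_scale[of M a "\<lambda>x. u t x - L x"] l1norm_scale[of M b "\<lambda>x. v t x - L' x"] by simp
      finally show ?case .
    qed
    show "((\<lambda>t. \<bar>a\<bar> * l1norm M (\<lambda>x. u t x - L x) + \<bar>b\<bar> * l1norm M (\<lambda>x. v t x - L' x)) \<longlongrightarrow> 0) F"
      using tendsto_add[OF tendsto_mult_right_zero[OF l1_limD(3)[OF u]] tendsto_mult_right_zero[OF l1_limD(3)[OF v]]]
      by simp
  qed
qed

lemma l1_lim_integral:
  assumes u: "l1_lim M u L F"
  shows "((\<lambda>t. integral\<^sup>L M (u t)) \<longlongrightarrow> integral\<^sup>L M L) F"
proof -
  have bnd: "\<forall>\<^sub>F t in F. \<bar>integral\<^sup>L M (u t) - integral\<^sup>L M L\<bar> \<le> l1norm M (\<lambda>x. u t x - L x)"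
    using l1_limD(2)[OF u]
  proof eventually_elim
    case (elim t)
    then have "integral\<^sup>L M (u t) - integral\<^sup>L M L = integral\<^sup>L M (\<lambda>x. u t x - L x)"
      using l1_limD(1)[OF u] by simp
    then show ?case using integral_le_l1norm(2)[of M "\<lambda>x. u t x - L x"] elim l1_limD(1)[OF u] by simp
  qed
  have "((\<lambda>t. integral\<^sup>L M (u t) - integral\<^sup>L M L) \<longlongrightarrow> 0) F"
  proof (rule tendsto_sandwich[OF _ _ _ l1_limD(3)[OF u]])
    show "((\<lambda>t. - l1norm M (\<lambda>x. u t x - L x)) \<longlongrightarrow> 0) F"
      using tendsto_minus[OF l1_limD(3)[OF u]] by simp
    show "\<forall>\<^sub>F t in F. integral\<^sup>L M (u t) - integral\<^sup>L M L \<le> l1norm M (\<lambda>x. u t x - L x)"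
      using bnd by eventually_elim simp
    show "\<forall>\<^sub>F t in F. - l1norm M (\<lambda>x. u t x - L x) \<le> integral\<^sup>L M (u t) - integral\<^sup>L M L"
      using bnd by eventually_elim simp
  qed
  then show ?thesis by (rule LIM_zero_cancel)
qed

lemma l1_lim_norm_le:
  assumes F: "F \<noteq> bot" and u: "l1_lim M u L F" and le: "\<forall>\<^sub>F t in F. l1norm M (u t) \<le> c"
  shows "l1norm M L \<le> c"
proof -
  have "l1_lim M (\<lambda>t x. \<bar>u t x\<bar>) (\<lambda>x. \<bar>L x\<bar>) F"
  proof (rule l1_limI)
    show "integrable M (\<lambda>x. \<bar>L x\<bar>)" using l1_limD(1)[OF u] by simp
    show "\<forall>\<^sub>F t in F. integrable M (\<lambda>x. \<bar>u t x\<bar>)" using l1_limD(2)[OF u] by eventually_elim simp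
    show "((\<lambda>t. l1norm M (\<lambda>x. \<bar>u t x\<bar> - \<bar>L x\<bar>)) \<longlongrightarrow> 0) F"
    proof (rule tendsto_sandwich[OF _ _ tendsto_const l1_limD(3)[OF u]])
      show "\<forall>\<^sub>F t in F. 0 \<le> l1norm M (\<lambda>x. \<bar>u t x\<bar> - \<bar>L x\<bar>)" by (simp add: l1norm_nonneg)
      show "\<forall>\<^sub>F t in F. l1norm M (\<lambda>x. \<bar>u t x\<bar> - \<bar>L x\<bar>) \<le> l1norm M (\<lambda>x. u t x - L x)"
        using l1_limD(2)[OF u]
      proof eventually_elim
        case (elim t)
        show ?case using elim l1_limD(1)[OF u]
          by (intro l1norm_mono) (auto simp: abs_triangle_ineq3)
      qed
    qed
  qed
  from l1_lim_integral[OF this] have "((\<lambda>t. l1norm M (u t)) \<longlongrightarrow> l1norm M L) F"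
    unfolding l1norm_def .
  from tendsto_le[OF F tendsto_const this le] show ?thesis .
qed

lemma l1_lim_subseq:
  assumes u: "l1_lim M u L sequentially" and int: "\<And>n. integrable M (u n)"
  obtains r where "strict_mono r" "AE x in M. (\<lambda>n. u (r n) x) \<longlonglongrightarrow> L x"
proof -
  have L: "integrable M L" using l1_limD(1)[OF u] .
  have "\<exists>r::nat\<Rightarrow>nat. strict_mono r \<and> (AE x in M. (\<lambda>n. u (r n) x - L x) \<longlonglongrightarrow> 0)"
  proof (rule tendsto_L1_AE_subseq)
    show "integrable M (\<lambda>x. u n x - L x)" for n using int L by auto
    show "(\<lambda>n. LINT x|M. norm (u n x - L x)) \<longlonglongrightarrow> 0"
      using l1_limD(3)[OF u] unfolding l1norm_def by simp
  qed
  then obtain r where r: "strict_mono r" "AE x in M. (\<lambda>n. u (r n) x - L x) \<longlonglongrightarrow> 0" by blast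
  from r(2) have "AE x in M. (\<lambda>n. u (r n) x) \<longlonglongrightarrow> L x"
    by eventually_elim (simp add: LIM_zero_iff)
  with r(1) show ?thesis by (rule that)
qed



lemma l1_complete:
  assumes int: "\<And>n. integrable M (u n)"
    and C: "\<And>e. e > 0 \<Longrightarrow> \<exists>N. \<forall>i\<ge>N. \<forall>j\<ge>N. l1norm M (\<lambda>x. u i x - u j x) < e"
  obtains L where "l1_lim M u L sequentially"
proof -
  have meas[measurable]: "\<And>n. u n \<in> borel_measurable M" using int by auto
  obtain r where r: "strict_mono r" "AE x in M. Cauchy (\<lambda>i. u (r i) x)"
  proof (rule cauchy_L1_AE_cauchy_subseq[where s=u and M=M])
    show "integrable M (u n)" for n by (rule int)
    show "\<exists>N. \<forall>i\<ge>N. \<forall>j\<ge>N. LINT x|M. norm (u i x - u j x) < e" if "e > 0" for e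
      using C[OF that] unfolding l1norm_def by simp
  qed auto
  define L where "L x = lim (\<lambda>i. u (r i) x)" for x
  have Lm[measurable]: "L \<in> borel_measurable M" unfolding L_def by measurable
  have conv: "AE x in M. (\<lambda>i. u (r i) x) \<longlonglongrightarrow> L x"
    using r(2) by eventually_elim (simp add: L_def Cauchy_convergent_iff convergent_LIMSEQ_iff)
  have key: "integrable M (\<lambda>x. u n x - L x) \<and> l1norm M (\<lambda>x. u n x - L x) \<le> e"
    if e: "e > 0" and N: "\<forall>i\<ge>N. \<forall>j\<ge>N. l1norm M (\<lambda>x. u i x - u j x) < e" and n: "n \<ge> N" for e N n
  proof -
    have "(\<integral>\<^sup>+x. ennreal \<bar>u n x - L x\<bar> \<partial>M) = (\<integral>\<^sup>+x. liminf (\<lambda>i. ennreal \<bar>u n x - u (r i) x\<bar>) \<partial>M)"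
    proof (rule nn_integral_cong_AE)
      show "AE x in M. ennreal \<bar>u n x - L x\<bar> = liminf (\<lambda>i. ennreal \<bar>u n x - u (r i) x\<bar>)"
        using conv
      proof eventually_elim
        case (elim x)
        have "(\<lambda>i. ennreal \<bar>u n x - u (r i) x\<bar>) \<longlonglongrightarrow> ennreal \<bar>u n x - L x\<bar>"
          by (intro tendsto_ennrealI tendsto_rabs tendsto_diff tendsto_const elim)
        then show ?case by (metis lim_imp_Liminf trivial_limit_sequentially)
      qed
    qed
    also have "\<dots> \<le> liminf (\<lambda>i. \<integral>\<^sup>+x. ennreal \<bar>u n x - u (r i) x\<bar> \<partial>M)"
      by (rule nn_integral_liminf) measurable
    also have "\<dots> \<le> ennreal e"
    proof (rule Liminf_le)
      show "\<forall>\<^sub>F i in sequentially. (\<integral>\<^sup>+x. ennreal \<bar>u n x - u (r i) x\<bar> \<partial>M) \<le> ennreal e"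
        using eventually_ge_at_top[of N]
      proof eventually_elim
        case (elim i)
        have "r i \<ge> N" using elim seq_suble[OF r(1), of i] by simp
        then have "l1norm M (\<lambda>x. u n x - u (r i) x) < e" using N n by blast
        moreover have "(\<integral>\<^sup>+x. ennreal \<bar>u n x - u (r i) x\<bar> \<partial>M) = ennreal (l1norm M (\<lambda>x. u n x - u (r i) x))"
          using int by (intro l1norm_nn) auto
        ultimately show ?case by (simp add: ennreal_leI)
      qed
    qed simp
    finally have le: "(\<integral>\<^sup>+x. ennreal \<bar>u n x - L x\<bar> \<partial>M) \<le> ennreal e" .
    have I: "integrable M (\<lambda>x. u n x - L x)"
      unfolding integrable_iff_bounded using le le_less_trans[OF le ennreal_less_top[of e]] by auto
    have "ennreal (l1norm M (\<lambda>x. u n x - L x)) \<le> ennreal e"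
      using le l1norm_nn[OF I] by simp
    then have "l1norm M (\<lambda>x. u n x - L x) \<le> e" using e by (simp add: ennreal_le_iff)
    with I show ?thesis by simp
  qed
  obtain N1 where N1: "\<forall>i\<ge>N1. \<forall>j\<ge>N1. l1norm M (\<lambda>x. u i x - u j x) < 1" using C[of 1] by auto
  have "integrable M (\<lambda>x. u N1 x - L x)" using key[OF _ N1, of N1] by simp
  then have LI: "integrable M L"
    using int[of N1] Bochner_Integration.integrable_diff[of M "u N1" "\<lambda>x. u N1 x - L x"] by simp
  have "l1_lim M u L sequentially"
  proof (rule l1_limI[OF LI])
    show "\<forall>\<^sub>F t in sequentially. integrable M (u t)" using int by simp
    show "(\<lambda>t. l1norm M (\<lambda>x. u t x - L x)) \<longlonglongrightarrow> 0"
    proof (rule LIMSEQ_I)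
      fix e :: real assume e: "e > 0"
      obtain N where N: "\<forall>i\<ge>N. \<forall>j\<ge>N. l1norm M (\<lambda>x. u i x - u j x) < e/2" using C[of "e/2"] e by auto
      have "\<forall>n\<ge>N. norm (l1norm M (\<lambda>x. u n x - L x) - 0) < e"
      proof (intro allI impI)
        fix n assume "n \<ge> N"
        then have "l1norm M (\<lambda>x. u n x - L x) \<le> e/2" using key[OF _ N, of n] e by simp
        then show "norm (l1norm M (\<lambda>x. u n x - L x) - 0) < e" using e l1norm_nonneg[of M] by simp
      qed
      then show "\<exists>no. \<forall>n\<ge>no. norm (l1norm M (\<lambda>x. u n x - L x) - 0) < e" by blast
    qed
  qed
  then show ?thesis by (rule that)
qed



lemma l1norm_sum:
  assumes "finite A" "\<And>k. k \<in> A \<Longrightarrow> integrable M (h k)"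
  shows "l1norm M (\<lambda>x. \<Sum>k\<in>A. h k x) \<le> (\<Sum>k\<in>A. l1norm M (h k))"
  using assms
proof (induction A rule: finite_induct)
  case empty
  then show ?case by (simp add: l1norm_def)
next
  case (insert a A)
  have "l1norm M (\<lambda>x. \<Sum>k\<in>insert a A. h k x) = l1norm M (\<lambda>x. h a x + (\<Sum>k\<in>A. h k x))"
    using insert by simp
  also have "\<dots> \<le> l1norm M (h a) + l1norm M (\<lambda>x. \<Sum>k\<in>A. h k x)"
    using insert by (intro l1norm_triangle) auto
  also have "\<dots> \<le> l1norm M (h a) + (\<Sum>k\<in>A. l1norm M (h k))"
    using insert by simp
  finally show ?case using insert by simp
qed

lemma op_sum:
  assumes U: "substochastic_op M U" and A: "finite A" and int: "\<And>k. k \<in> A \<Longrightarrow> integrable M (h k)"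
  shows "AE x in M. U (\<lambda>y. \<Sum>k\<in>A. c k * h k y) x = (\<Sum>k\<in>A. c k * U (h k) x)"
  using A int
proof (induction A rule: finite_induct)
  case empty
  have "AE x in M. U (\<lambda>y. 0 * (\<lambda>_. 0) y + 0 * (\<lambda>_. 0) y) x = 0 * U (\<lambda>_. 0) x + 0 * U (\<lambda>_. 0) x"
    by (rule op_lin[OF U]) simp_all
  then show ?case by simp
next
  case (insert a A)
  have IA: "integrable M (\<lambda>y. \<Sum>k\<in>A. c k * h k y)" using insert by auto
  have Ia: "integrable M (h a)" using insert by auto
  have "AE x in M. U (\<lambda>y. c a * h a y + 1 * (\<Sum>k\<in>A. c k * h k y)) x
      = c a * U (h a) x + 1 * U (\<lambda>y. \<Sum>k\<in>A. c k * h k y) x"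
    by (rule op_lin[OF U Ia IA])
  moreover have "AE x in M. U (\<lambda>y. \<Sum>k\<in>A. c k * h k y) x = (\<Sum>k\<in>A. c k * U (h k) x)"
    using insert by auto
  ultimately have "AE x in M. U (\<lambda>y. c a * h a y + 1 * (\<Sum>k\<in>A. c k * h k y)) x
      = c a * U (h a) x + (\<Sum>k\<in>A. c k * U (h k) x)" by eventually_elim simp
  then show ?case using insert(1,2) by simp
qed

lemma op_sum':
  assumes U: "substochastic_op M U" and A: "finite A" and int: "\<And>k. k \<in> A \<Longrightarrow> integrable M (h k)"
  shows "AE x in M. U (\<lambda>y. \<Sum>k\<in>A. h k y) x = (\<Sum>k\<in>A. U (h k) x)"
  using op_sum[OF U A int, where c="\<lambda>_. 1"] by simp

section \<open>Semigroups\<close>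

context
  fixes M :: "'a measure" and T :: "real \<Rightarrow> ('a \<Rightarrow> real) \<Rightarrow> ('a \<Rightarrow> real)"
  assumes T: "substochastic_sg M T"
begin

lemma sg_op: "0 \<le> t \<Longrightarrow> substochastic_op M (T t)"
  using T unfolding substochastic_sg_def by (elim conjE) blast

lemma sg_0: "integrable M f \<Longrightarrow> AE x in M. T 0 f x = f x"
  using T unfolding substochastic_sg_def by (elim conjE) blast

lemma sg_add: "0 \<le> t \<Longrightarrow> 0 \<le> s \<Longrightarrow> integrable M f \<Longrightarrow> AE x in M. T (t + s) f x = T t (T s f) x"
  using T unfolding substochastic_sg_def by (elim conjE) blast

lemma sg_cont: "integrable M f \<Longrightarrow> ((\<lambda>t. l1norm M (\<lambda>x. T t f x - f x)) \<longlongrightarrow> 0) (at_right 0)"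
  using T unfolding substochastic_sg_def by (elim conjE) blast

lemma sg_int: "0 \<le> t \<Longrightarrow> integrable M f \<Longrightarrow> integrable M (T t f)"
  using op_int[OF sg_op] by blast

lemma sg_contr: "0 \<le> t \<Longrightarrow> integrable M f \<Longrightarrow> l1norm M (T t f) \<le> l1norm M f"
  using op_contr[OF sg_op] by blast

lemma sg_cont_eps:
  assumes f: "integrable M f" and e: "e > 0"
  shows "\<exists>\<eta>>0. \<forall>r. 0 \<le> r \<and> r < \<eta> \<longrightarrow> l1norm M (\<lambda>x. T r f x - f x) < e"
proof -
  have "\<forall>\<^sub>F t in at_right 0. l1norm M (\<lambda>x. T t f x - f x) < e"
    using order_tendstoD(2)[OF sg_cont[OF f] e] .
  then obtain \<eta> where \<eta>: "\<eta> > 0" "\<And>r. 0 < r \<Longrightarrow> r < \<eta> \<Longrightarrow> l1norm M (\<lambda>x. T r f x - f x) < e"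
    unfolding eventually_at_right_field by auto
  have "l1norm M (\<lambda>x. T 0 f x - f x) = l1norm M (\<lambda>x. 0)"
    using sg_0[OF f] sg_int[OF _ f, of 0] f by (intro l1norm_cong) (auto elim!: eventually_mono)
  then have "l1norm M (\<lambda>x. T 0 f x - f x) < e" using e by (simp add: l1norm_def)
  with \<eta> show ?thesis by (metis le_less)
qed

end



context
  fixes M :: "'a measure" and T :: "real \<Rightarrow> ('a \<Rightarrow> real) \<Rightarrow> ('a \<Rightarrow> real)"
    and l :: real and g :: "'a \<Rightarrow> real"
  assumes T: "substochastic_sg M T" and l: "l > 0" and g: "integrable M g"
begin

definition dy :: "nat \<Rightarrow> real" where "dy n = (1/2) ^ n"

definition Rs :: "nat \<Rightarrow> nat \<Rightarrow> 'a \<Rightarrow> real" where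
  "Rs n N = (\<lambda>x. \<Sum>k<N. dy n * exp (- l * (real k * dy n)) * T (real k * dy n) g x)"

lemma dy_pos: "0 < dy n" and dy_le1: "dy n \<le> 1"
  unfolding dy_def by (auto simp: power_le_one)

lemma Tg_int: "0 \<le> s \<Longrightarrow> integrable M (T s g)"
  using sg_int[OF T _ g] by blast

lemma Rs_int: "integrable M (Rs n N)"
  unfolding Rs_def
  by (intro Bochner_Integration.integrable_sum integrable_mult_right Tg_int)
     (simp add: dy_def)

lemma geom_tail:
  fixes q :: real
  assumes "0 \<le> q" "q < 1" "N \<le> N'"
  shows "(\<Sum>k\<in>{N..<N'}. q ^ k) \<le> q ^ N / (1 - q)"
proof -
  have "(\<Sum>k\<in>{N..<N'}. q ^ k) = (\<Sum>k<N'-N. q ^ (N + k))"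
    using assms(3) by (intro sum.reindex_bij_witness[of _ "\<lambda>k. k + N" "\<lambda>k. k - N"]) auto
  also have "\<dots> = q ^ N * (\<Sum>k<N'-N. q ^ k)" by (simp add: power_add sum_distrib_left)
  also have "\<dots> = q ^ N * ((1 - q ^ (N'-N)) / (1 - q))"
    using assms by (subst sum_gp_strict) auto
  also have "\<dots> \<le> q ^ N * (1 / (1 - q))"
    using assms by (intro mult_left_mono divide_right_mono) auto
  finally show ?thesis by simp
qed

definition Cn :: real where "Cn = 1 / l + 1"

lemma dy_geom_bound: "dy n / (1 - exp (- l * dy n)) \<le> Cn"
proof -
  define x where "x = l * dy n"
  have x: "x > 0" unfolding x_def using l dy_pos by simp
  have "1 + x \<le> exp x" by (rule exp_ge_add_one_self)
  then have "exp (-x) \<le> 1 / (1 + x)" using x by (simp add: exp_minus field_simps)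
  then have "1 - exp (-x) \<ge> x / (1 + x)" using x by (simp add: field_simps)
  then have "dy n / (1 - exp (-x)) \<le> dy n / (x / (1 + x))"
    using x dy_pos[of n] by (intro divide_left_mono) auto
  also have "\<dots> = 1 / l + dy n" unfolding x_def using l dy_pos[of n] by (simp add: field_simps)
  also have "\<dots> \<le> Cn" unfolding Cn_def using dy_le1[of n] by simp
  finally show ?thesis unfolding x_def by simp
qed

lemma Cn_pos: "0 < Cn" unfolding Cn_def using l by (auto intro!: add_pos_pos)

lemma Rs_tail:
  assumes "N \<le> N'"
  shows "l1norm M (\<lambda>x. Rs n N' x - Rs n N x) \<le> exp (- l * (real N * dy n)) * Cn * l1norm M g"
proof -
  define q where "q = exp (- l * dy n)"
  have q: "0 \<le> q" "q < 1" unfolding q_def using l dy_pos[of n] by auto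
  have eq: "(\<lambda>x. Rs n N' x - Rs n N x) = (\<lambda>x. \<Sum>k\<in>{N..<N'}. dy n * exp (- l * (real k * dy n)) * T (real k * dy n) g x)"
    unfolding Rs_def lessThan_atLeast0 using sum_diff_nat_ivl[of 0 N N'] assms by (intro ext) simp
  have "l1norm M (\<lambda>x. Rs n N' x - Rs n N x)
      \<le> (\<Sum>k\<in>{N..<N'}. l1norm M (\<lambda>x. dy n * exp (- l * (real k * dy n)) * T (real k * dy n) g x))"
    unfolding eq by (intro l1norm_sum) (auto intro!: integrable_mult_right Tg_int simp: dy_def)
  also have "\<dots> \<le> (\<Sum>k\<in>{N..<N'}. dy n * q ^ k * l1norm M g)"
  proof (rule sum_mono)
    fix k assume "k \<in> {N..<N'}"
    have eqk: "exp (- l * (real k * dy n)) = q ^ k"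
    proof -
      have "exp (- l * (real k * dy n)) = exp (real k * (- l * dy n))" by (simp add: algebra_simps)
      also have "\<dots> = q ^ k" unfolding q_def by (rule exp_of_nat_mult)
      finally show ?thesis .
    qed
    have "l1norm M (\<lambda>x. dy n * exp (- l * (real k * dy n)) * T (real k * dy n) g x)
        = dy n * exp (- l * (real k * dy n)) * l1norm M (T (real k * dy n) g)"
      using l1norm_scale[of M "dy n * exp (- l * (real k * dy n))" "T (real k * dy n) g"] dy_pos[of n]
      by (simp add: mult.assoc)
    also have "\<dots> \<le> dy n * exp (- l * (real k * dy n)) * l1norm M g"
      using sg_contr[OF T _ g, of "real k * dy n"] dy_pos[of n] by (intro mult_left_mono) auto
    finally show "l1norm M (\<lambda>x. dy n * exp (- l * (real k * dy n)) * T (real k * dy n) g x) \<le> dy n * q ^ k * l1norm M g"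
      unfolding eqk .
  qed
  also have "\<dots> = dy n * l1norm M g * (\<Sum>k\<in>{N..<N'}. q ^ k)"
    by (simp add: sum_distrib_left algebra_simps)
  also have "\<dots> \<le> dy n * l1norm M g * (q ^ N / (1 - q))"
    using geom_tail[OF q assms] dy_pos[of n] l1norm_nonneg[of M g] by (intro mult_left_mono) auto
  also have "\<dots> = q ^ N * (dy n / (1 - q)) * l1norm M g" by simp
  also have "\<dots> \<le> q ^ N * Cn * l1norm M g"
  proof (rule mult_right_mono[OF mult_left_mono])
    show "dy n / (1 - q) \<le> Cn" using dy_geom_bound[of n] unfolding q_def .
  qed (use q l1norm_nonneg[of M g] in auto)
  also have "q ^ N = exp (real N * (- l * dy n))" unfolding q_def by (rule exp_of_nat_mult[symmetric])
  also have "\<dots> = exp (- l * (real N * dy n))" by (simp add: algebra_simps)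
  finally show ?thesis .
qed

lemma sT_nonneg: "0 \<le> real k * dy n" by (simp add: dy_def)

lemma Rs_shift:
  "AE x in M. T (real D * dy n) (Rs n N) x = exp (l * (real D * dy n)) * (Rs n (N + D) x - Rs n D x)"
proof -
  define s where "s k = real k * dy n" for k
  define c where "c k = dy n * exp (- l * s k)" for k
  have Rs': "Rs n N = (\<lambda>y. \<Sum>k\<in>{..<N}. c k * T (s k) g y)" for N
    unfolding Rs_def c_def s_def by (simp add: mult.assoc)
  have s0: "0 \<le> s k" for k unfolding s_def by (rule sT_nonneg)
  have A1: "AE x in M. T (s D) (Rs n N) x = (\<Sum>k\<in>{..<N}. c k * T (s D) (T (s k) g) x)"
    unfolding Rs' by (rule op_sum[OF sg_op[OF T s0]]) (auto intro: Tg_int s0)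
  have A2: "AE x in M. \<forall>k\<in>{..<N}. T (s D + s k) g x = T (s D) (T (s k) g) x"
    by (rule eventually_ball_finite) (auto intro!: sg_add[OF T s0 s0 g])
  have sadd: "s D + s k = s (k + D)" for k unfolding s_def by (simp add: algebra_simps)
  have cexp: "c k = exp (l * s D) * (dy n * exp (- l * s (k + D)))" for k
    unfolding c_def sadd[symmetric] by (simp add: exp_add[symmetric] algebra_simps)
  have "(\<Sum>k\<in>{..<N}. c k * T (s (k + D)) g x)
      = exp (l * s D) * (\<Sum>k\<in>{..<N}. dy n * exp (- l * s (k + D)) * T (s (k + D)) g x)" for x
    unfolding cexp by (simp add: sum_distrib_left algebra_simps)
  also have "(\<Sum>k\<in>{..<N}. dy n * exp (- l * s (k + D)) * T (s (k + D)) g x)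
      = (\<Sum>i\<in>{D..<N + D}. dy n * exp (- l * s i) * T (s i) g x)" for x
    using sum.shift_bounds_nat_ivl[of "\<lambda>i. dy n * exp (- l * s i) * T (s i) g x" 0 D N]
    by (simp add: lessThan_atLeast0)
  also have "(\<Sum>i\<in>{D..<N + D}. dy n * exp (- l * s i) * T (s i) g x) = Rs n (N + D) x - Rs n D x" for x
    unfolding Rs_def s_def lessThan_atLeast0 by (rule sum_diff_nat_ivl[symmetric]) simp_all
  finally have A3: "(\<Sum>k\<in>{..<N}. c k * T (s (k + D)) g x) = exp (l * s D) * (Rs n (N + D) x - Rs n D x)" for x .
  from A1 A2 show ?thesis
  proof eventually_elim
    case (elim x)
    then have "T (s D) (Rs n N) x = (\<Sum>k\<in>{..<N}. c k * T (s (k + D)) g x)"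
      by (simp add: sadd)
    then show ?case using A3 unfolding s_def by simp
  qed
qed

lemma dy_mult: "n \<le> m \<Longrightarrow> dy m * 2 ^ (m - n) = dy n"
  unfolding dy_def by (simp add: power_diff field_simps power_one_over)

lemma Rs_group:
  assumes nm: "n \<le> m"
  shows "AE x in M. Rs m (K * 2 ^ (m - n)) x
      = (\<Sum>k<K. exp (- l * (real k * dy n)) * T (real k * dy n) (Rs m (2 ^ (m - n))) x)"
proof -
  define B :: nat where "B = 2 ^ (m - n)"
  define t where "t k = real k * dy n" for k
  define u where "u j = real j * dy m" for j
  define c where "c j = dy m * exp (- l * u j)" for j
  have t0: "0 \<le> t k" for k unfolding t_def by (rule sT_nonneg)
  have u0: "0 \<le> u j" for j unfolding u_def by (rule sT_nonneg)
  have tu: "real (k * B + j) * dy m = t k + u j" for k j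
    unfolding t_def u_def B_def using dy_mult[OF nm] by (simp add: algebra_simps flip: dy_mult[OF nm])
  have RsB: "Rs m B = (\<lambda>y. \<Sum>j\<in>{..<B}. c j * T (u j) g y)"
    unfolding Rs_def c_def u_def by (simp add: mult.assoc)
  have A1: "AE x in M. \<forall>k\<in>{..<K}. T (t k) (Rs m B) x = (\<Sum>j\<in>{..<B}. c j * T (t k) (T (u j) g) x)"
    by (rule eventually_ball_finite) (auto simp: RsB intro!: op_sum[OF sg_op[OF T t0]] Tg_int u0)
  have A2: "AE x in M. \<forall>k\<in>{..<K}. \<forall>j\<in>{..<B}. T (t k + u j) g x = T (t k) (T (u j) g) x"
    by (intro eventually_ball_finite ballI) (auto intro!: sg_add[OF T t0 u0 g])
  have sumeq: "Rs m (K * B) x = (\<Sum>k<K. \<Sum>j<B. exp (- l * t k) * (c j * T (t k + u j) g x))" for x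
  proof -
    have "Rs m (K * B) x = (\<Sum>k<K. \<Sum>i\<in>{k * B..<k * B + B}. dy m * exp (- l * (real i * dy m)) * T (real i * dy m) g x)"
      unfolding Rs_def by (rule sum.nat_group[symmetric])
    also have "\<dots> = (\<Sum>k<K. \<Sum>j<B. dy m * exp (- l * (real (j + k * B) * dy m)) * T (real (j + k * B) * dy m) g x)"
    proof -
      have sh: "sum f {k * B..<k * B + B} = (\<Sum>j<B. f (j + k * B))" for f :: "nat \<Rightarrow> real" and k
        using sum.shift_bounds_nat_ivl[of f 0 "k * B" B] by (simp add: lessThan_atLeast0 add.commute)
      show ?thesis by (rule sum.cong[OF refl]) (rule sh)
    qed
    also have "\<dots> = (\<Sum>k<K. \<Sum>j<B. exp (- l * t k) * (c j * T (t k + u j) g x))"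
    proof (intro sum.cong refl)
      fix k j
      have e: "real (j + k * B) * dy m = t k + u j" using tu[of k j] by (simp add: add.commute)
      show "dy m * exp (- l * (real (j + k * B) * dy m)) * T (real (j + k * B) * dy m) g x
          = exp (- l * t k) * (c j * T (t k + u j) g x)"
        unfolding e c_def by (simp add: algebra_simps exp_add[symmetric])
    qed
    finally show ?thesis .
  qed
  from A1 A2 show ?thesis
  proof eventually_elim
    case (elim x)
    have "Rs m (K * B) x = (\<Sum>k<K. exp (- l * t k) * T (t k) (Rs m B) x)"
      unfolding sumeq using elim by (simp add: sum_distrib_left algebra_simps)
    then show ?case unfolding B_def t_def .
  qed
qed

lemma near_g:
  assumes e: "e > 0"
  shows "\<exists>\<eta>>0. \<forall>s. 0 \<le> s \<and> s < \<eta> \<longrightarrow> l1norm M (\<lambda>x. exp (- l * s) * T s g x - g x) < e"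
proof -
  obtain \<eta>1 where \<eta>1: "\<eta>1 > 0" "\<And>r. 0 \<le> r \<and> r < \<eta>1 \<Longrightarrow> l1norm M (\<lambda>x. T r g x - g x) < e/2"
    using sg_cont_eps[OF T g, of "e/2"] e by auto
  define \<eta>2 where "\<eta>2 = e / (2 * (l * l1norm M g + 1))"
  have lg: "0 \<le> l * l1norm M g" using l l1norm_nonneg[of M g] by simp
  have \<eta>2: "\<eta>2 > 0" unfolding \<eta>2_def using e lg by simp
  show ?thesis
  proof (intro exI[of _ "min \<eta>1 \<eta>2"] conjI allI impI)
    show "0 < min \<eta>1 \<eta>2" using \<eta>1 \<eta>2 by simp
    fix s assume s: "0 \<le> s \<and> s < min \<eta>1 \<eta>2"
    have eq: "(\<lambda>x. exp (- l * s) * T s g x - g x) = (\<lambda>x. exp (- l * s) * (T s g x - g x) + (exp (- l * s) - 1) * g x)"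
      by (auto simp: algebra_simps)
    have "l1norm M (\<lambda>x. exp (- l * s) * T s g x - g x)
        \<le> l1norm M (\<lambda>x. exp (- l * s) * (T s g x - g x)) + l1norm M (\<lambda>x. (exp (- l * s) - 1) * g x)"
      unfolding eq using Tg_int[of s] s g by (intro l1norm_triangle) auto
    also have "\<dots> = exp (- l * s) * l1norm M (\<lambda>x. T s g x - g x) + \<bar>exp (- l * s) - 1\<bar> * l1norm M g"
      by (simp add: l1norm_scale)
    also have "\<dots> \<le> 1 * (e/2) + (l * s) * l1norm M g"
    proof (rule add_mono[OF mult_mono mult_right_mono])
      show "exp (- l * s) \<le> 1" using l s by simp
      show "l1norm M (\<lambda>x. T s g x - g x) \<le> e/2" using \<eta>1(2)[of s] s by (simp add: less_imp_le)
      have a: "1 - l * s \<le> exp (- l * s)" using exp_ge_add_one_self[of "- l * s"] by simp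
      have b: "exp (- l * s) \<le> 1" using l s by simp
      have "\<bar>exp (- l * s) - 1\<bar> = 1 - exp (- l * s)" using b by simp
      then show "\<bar>exp (- l * s) - 1\<bar> \<le> l * s" using a by linarith
    qed (use l1norm_nonneg in auto)
    also have "(l * s) * l1norm M g \<le> \<eta>2 * (l * l1norm M g)"
      using s l l1norm_nonneg[of M g] by (simp add: mult_right_mono)
    also have "\<eta>2 * (l * l1norm M g) < e/2"
      unfolding \<eta>2_def using e lg by (simp add: field_simps)
    finally show "l1norm M (\<lambda>x. exp (- l * s) * T s g x - g x) < e" by simp
  qed
qed

lemma Rs_near:
  assumes \<eta>: "\<forall>s. 0 \<le> s \<and> s < \<eta> \<longrightarrow> l1norm M (\<lambda>x. exp (- l * s) * T s g x - g x) < e"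
    and d: "real D * dy n \<le> \<eta>"
  shows "l1norm M (\<lambda>x. Rs n D x - (real D * dy n) * g x) \<le> (real D * dy n) * e"
proof -
  have eq: "(\<lambda>x. Rs n D x - (real D * dy n) * g x)
      = (\<lambda>x. \<Sum>k<D. dy n * (exp (- l * (real k * dy n)) * T (real k * dy n) g x - g x))"
  proof
    fix x
    have "(\<Sum>k<D. dy n * (exp (- l * (real k * dy n)) * T (real k * dy n) g x - g x))
        = (\<Sum>k<D. dy n * exp (- l * (real k * dy n)) * T (real k * dy n) g x) - (\<Sum>k<D. dy n * g x)"
      unfolding right_diff_distrib sum_subtractf by (simp add: mult.assoc)
    then show "Rs n D x - (real D * dy n) * g x
        = (\<Sum>k<D. dy n * (exp (- l * (real k * dy n)) * T (real k * dy n) g x - g x))"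
      unfolding Rs_def by simp
  qed
  have "l1norm M (\<lambda>x. Rs n D x - (real D * dy n) * g x)
      \<le> (\<Sum>k<D. l1norm M (\<lambda>x. dy n * (exp (- l * (real k * dy n)) * T (real k * dy n) g x - g x)))"
    unfolding eq by (intro l1norm_sum) (auto intro!: Tg_int sT_nonneg g)
  also have "\<dots> \<le> (\<Sum>k<D. dy n * e)"
  proof (rule sum_mono)
    fix k assume k: "k \<in> {..<D}"
    have "real k * dy n < real D * dy n" using k dy_pos[of n] by simp
    then have "l1norm M (\<lambda>x. exp (- l * (real k * dy n)) * T (real k * dy n) g x - g x) < e"
      using \<eta> d sT_nonneg[of k n] by auto
    then show "l1norm M (\<lambda>x. dy n * (exp (- l * (real k * dy n)) * T (real k * dy n) g x - g x)) \<le> dy n * e"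
      using l1norm_scale[of M "dy n"] dy_pos[of n] by (simp add: mult_left_mono)
  qed
  also have "\<dots> = (real D * dy n) * e" by simp
  finally show ?thesis .
qed

definition F :: "nat \<Rightarrow> 'a \<Rightarrow> real" where "F n = Rs n (n * 2 ^ n)"

lemma F_int: "integrable M (F n)" unfolding F_def by (rule Rs_int)

lemma dyN: "real (n * 2 ^ m) * dy m = real n"
  unfolding dy_def by (simp add: power_one_over)

lemma F_cauchy_step:
  assumes nm: "n \<le> m"
    and \<eta>: "\<forall>s. 0 \<le> s \<and> s < \<eta> \<longrightarrow> l1norm M (\<lambda>x. exp (- l * s) * T s g x - g x) < e"
    and dn: "dy n \<le> \<eta>" and e: "e \<ge> 0"
  shows "l1norm M (\<lambda>x. F m x - F n x) \<le> exp (- l * real n) * Cn * l1norm M g + Cn * e"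
proof -
  define B :: nat where "B = 2 ^ (m - n)"
  define K :: nat where "K = n * 2 ^ n"
  have KB: "K * B = n * 2 ^ m" unfolding K_def B_def using nm by (simp add: power_add[symmetric])
  have BD: "real B * dy m = dy n" unfolding B_def using dy_mult[OF nm] by (simp add: mult.commute)
  define t where "t k = real k * dy n" for k
  have t0: "0 \<le> t k" for k unfolding t_def by (rule sT_nonneg)
  define v where "v = (\<lambda>y. Rs m B y - dy n * g y)"
  have vI: "integrable M v" unfolding v_def using Rs_int g by auto
  have vn: "l1norm M v \<le> dy n * e"
    using Rs_near[OF \<eta>, of B m] BD dn unfolding v_def by simp
  have first: "l1norm M (\<lambda>x. F m x - Rs m (K * B) x) \<le> exp (- l * real n) * Cn * l1norm M g"
    using Rs_tail[of "n * 2 ^ m" "m * 2 ^ m" m] nm unfolding F_def KB dyN by simp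
  have A1: "AE x in M. Rs m (K * B) x = (\<Sum>k<K. exp (- l * t k) * T (t k) (Rs m B) x)"
    using Rs_group[OF nm, of K] unfolding B_def t_def .
  have A2: "AE x in M. \<forall>k\<in>{..<K}. T (t k) v x = T (t k) (Rs m B) x - dy n * T (t k) g x"
  proof (rule eventually_ball_finite, simp, intro ballI)
    fix k
    have "AE x in M. T (t k) v x = T (t k) (Rs m B) x - T (t k) (\<lambda>y. dy n * g y) x"
      unfolding v_def by (rule op_diff[OF sg_op[OF T t0]]) (use Rs_int g in auto)
    moreover have "AE x in M. T (t k) (\<lambda>y. dy n * g y) x = dy n * T (t k) g x"
      by (rule op_scale[OF sg_op[OF T t0] g])
    ultimately show "AE x in M. T (t k) v x = T (t k) (Rs m B) x - dy n * T (t k) g x"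
      by eventually_elim simp
  qed
  have second_eq: "AE x in M. Rs m (K * B) x - F n x = (\<Sum>k<K. exp (- l * t k) * T (t k) v x)"
    using A1 A2
  proof eventually_elim
    case (elim x)
    have "F n x = (\<Sum>k<K. exp (- l * t k) * (dy n * T (t k) g x))"
      unfolding F_def Rs_def K_def t_def by (simp add: algebra_simps)
    then have "Rs m (K * B) x - F n x
        = (\<Sum>k<K. exp (- l * t k) * T (t k) (Rs m B) x - exp (- l * t k) * (dy n * T (t k) g x))"
      using elim(1) by (simp add: sum_subtractf)
    also have "\<dots> = (\<Sum>k<K. exp (- l * t k) * T (t k) v x)"
    proof (rule sum.cong[OF refl])
      fix k assume "k \<in> {..<K}"
      then have "T (t k) v x = T (t k) (Rs m B) x - dy n * T (t k) g x" using elim(2) by blast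
      then show "exp (- l * t k) * T (t k) (Rs m B) x - exp (- l * t k) * (dy n * T (t k) g x)
          = exp (- l * t k) * T (t k) v x" by (simp add: right_diff_distrib[symmetric])
    qed
    finally show ?case .
  qed
  have "l1norm M (\<lambda>x. Rs m (K * B) x - F n x) = l1norm M (\<lambda>x. \<Sum>k<K. exp (- l * t k) * T (t k) v x)"
    using second_eq Rs_int F_int sg_int[OF T t0 vI] by (intro l1norm_cong) auto
  also have "\<dots> \<le> (\<Sum>k<K. l1norm M (\<lambda>x. exp (- l * t k) * T (t k) v x))"
    using sg_int[OF T t0 vI] by (intro l1norm_sum) auto
  also have "\<dots> \<le> (\<Sum>k<K. exp (- l * dy n) ^ k * (dy n * e))"
  proof (rule sum_mono)
    fix k
    have "l1norm M (\<lambda>x. exp (- l * t k) * T (t k) v x) = exp (- l * t k) * l1norm M (T (t k) v)"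
      by (simp add: l1norm_scale)
    also have "\<dots> \<le> exp (- l * t k) * (dy n * e)"
      using order_trans[OF sg_contr[OF T t0 vI] vn] by (intro mult_left_mono) auto
    finally have "l1norm M (\<lambda>x. exp (- l * t k) * T (t k) v x) \<le> exp (- l * t k) * (dy n * e)" .
    moreover have "exp (- l * t k) = exp (- l * dy n) ^ k"
    proof -
      have "exp (- l * t k) = exp (real k * (- l * dy n))" unfolding t_def by (simp add: algebra_simps)
      also have "\<dots> = exp (- l * dy n) ^ k" by (rule exp_of_nat_mult)
      finally show ?thesis .
    qed
    ultimately show "l1norm M (\<lambda>x. exp (- l * t k) * T (t k) v x) \<le> exp (- l * dy n) ^ k * (dy n * e)" by simp
  qed
  also have "\<dots> = (dy n * e) * (\<Sum>k<K. exp (- l * dy n) ^ k)" by (simp add: sum_distrib_left algebra_simps)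
  also have "\<dots> \<le> (dy n * e) * (1 / (1 - exp (- l * dy n)))"
  proof (rule mult_left_mono)
    have q: "0 \<le> exp (- l * dy n)" "exp (- l * dy n) < 1" using l dy_pos[of n] by auto
    show "(\<Sum>k<K. exp (- l * dy n) ^ k) \<le> 1 / (1 - exp (- l * dy n))"
      using geom_tail[OF q, of 0 K] by (simp add: lessThan_atLeast0)
    show "0 \<le> dy n * e" using dy_pos[of n] e by simp
  qed
  also have "\<dots> = e * (dy n / (1 - exp (- l * dy n)))" by simp
  also have "\<dots> \<le> e * Cn" using dy_geom_bound[of n] e by (rule mult_left_mono)
  finally have second: "l1norm M (\<lambda>x. Rs m (K * B) x - F n x) \<le> Cn * e" by (simp add: mult.commute)
  have "l1norm M (\<lambda>x. F m x - F n x) \<le> l1norm M (\<lambda>x. F m x - Rs m (K * B) x) + l1norm M (\<lambda>x. Rs m (K * B) x - F n x)"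
    by (rule l1norm_triangle3[OF F_int Rs_int F_int])
  with first second show ?thesis by simp
qed

lemma dy_mono: "n \<le> m \<Longrightarrow> dy m \<le> dy n"
  unfolding dy_def by (rule power_decreasing) auto

lemma dy_small: "e > 0 \<Longrightarrow> \<exists>N. \<forall>n\<ge>N. dy n < e"
proof -
  assume e: "e > 0"
  obtain N where "(1/2::real) ^ N < e" using real_arch_pow_inv[OF e, of "1/2"] by auto
  then have "\<forall>n\<ge>N. dy n < e" using dy_mono unfolding dy_def by (meson le_less_trans)
  then show ?thesis by blast
qed

lemma exp_small:
  assumes e: "e > 0" and c: "c \<ge> 0"
  shows "\<exists>N. \<forall>n\<ge>N. exp (- l * real n) * c < e"
proof -
  obtain N :: nat where N: "c / (l * e) < real N" using reals_Archimedean2 by blast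
  have "exp (- l * real n) * c < e" if n: "n \<ge> N" for n
  proof -
    have "1 + l * real n \<le> exp (l * real n)" by (rule exp_ge_add_one_self)
    moreover have pos: "0 < 1 + l * real n" using l by (simp add: add_pos_nonneg)
    ultimately have "1 / exp (l * real n) \<le> 1 / (1 + l * real n)"
      by (intro divide_left_mono) auto
    then have "exp (- l * real n) \<le> 1 / (1 + l * real n)" by (simp add: exp_minus inverse_eq_divide)
    then have "exp (- l * real n) * c \<le> 1 / (1 + l * real n) * c" using c by (rule mult_right_mono)
    then have "exp (- l * real n) * c \<le> c / (1 + l * real n)" by simp
    also have "\<dots> < e"
    proof -
      have "c / (l * e) < real n" using N n by simp
      then have "c < real n * (l * e)" using l e by (simp add: field_simps)
      then have "c < e * (1 + l * real n)" using e by (simp add: algebra_simps)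
      then show ?thesis using pos by (simp add: divide_less_eq)
    qed
    finally show ?thesis .
  qed
  then show ?thesis by blast
qed

lemma F_cauchy: "e > 0 \<Longrightarrow> \<exists>N. \<forall>i\<ge>N. \<forall>j\<ge>N. l1norm M (\<lambda>x. F i x - F j x) < e"
proof -
  assume e: "e > 0"
  define \<epsilon> where "\<epsilon> = e / (4 * Cn)"
  have \<epsilon>: "\<epsilon> > 0" unfolding \<epsilon>_def using e Cn_pos by simp
  obtain \<eta> where \<eta>: "\<eta> > 0" "\<forall>s. 0 \<le> s \<and> s < \<eta> \<longrightarrow> l1norm M (\<lambda>x. exp (- l * s) * T s g x - g x) < \<epsilon>"
    using near_g[OF \<epsilon>] by blast
  obtain N1 where N1: "\<forall>n\<ge>N1. dy n < \<eta>" using dy_small[OF \<eta>(1)] by blast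
  obtain N2 where N2: "\<forall>n\<ge>N2. exp (- l * real n) * (Cn * l1norm M g) < e / 4"
    using exp_small[of "e/4" "Cn * l1norm M g"] e Cn_pos l1norm_nonneg[of M g] by auto
  have le: "l1norm M (\<lambda>x. F j x - F i x) < e" if ij: "max N1 N2 \<le> i" "i \<le> j" for i j
  proof -
    have "l1norm M (\<lambda>x. F j x - F i x) \<le> exp (- l * real i) * Cn * l1norm M g + Cn * \<epsilon>"
      using F_cauchy_step[OF ij(2) \<eta>(2)] N1 ij \<epsilon> by (auto intro: less_imp_le)
    also have "\<dots> < e / 4 + e / 4"
      using N2 ij Cn_pos unfolding \<epsilon>_def by (intro add_less_le_mono) (auto simp: mult.assoc)
    finally show ?thesis using e by linarith
  qed
  show ?thesis
  proof (intro exI[of _ "max N1 N2"] allI impI)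
    fix i j assume "max N1 N2 \<le> i" "max N1 N2 \<le> j"
    then show "l1norm M (\<lambda>x. F i x - F j x) < e"
      using le[of i j] le[of j i] l1norm_minus_commute[of M "F i" "F j"] by (cases "i \<le> j") auto
  qed
qed

lemma F_lim: obtains f where "l1_lim M F f sequentially"
  using l1_complete[OF F_int F_cauchy] by blast

lemma F_nonneg:
  assumes "AE x in M. 0 \<le> g x"
  shows "AE x in M. 0 \<le> F n x"
proof -
  have "AE x in M. \<forall>k\<in>{..<n * 2 ^ n}. 0 \<le> T (real k * dy n) g x"
    by (intro eventually_ball_finite ballI) (auto intro!: op_pos[OF sg_op[OF T sT_nonneg] g assms])
  then show ?thesis
  proof eventually_elim
    case (elim x)
    then show ?case unfolding F_def Rs_def using dy_pos[of n]
      by (intro sum_nonneg) (auto intro!: mult_nonneg_nonneg less_imp_le)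
  qed
qed

lemma dyadic_est:
  assumes f: "l1_lim M F f sequentially"
    and \<eta>: "\<forall>s. 0 \<le> s \<and> s < \<eta> \<longrightarrow> l1norm M (\<lambda>x. exp (- l * s) * T s g x - g x) < \<epsilon>"
    and \<epsilon>: "\<epsilon> > 0" and d: "d = real j * dy p" "0 < d" "d \<le> \<eta>"
  shows "l1norm M (\<lambda>x. T d f x - exp (l * d) * f x + exp (l * d) * d * g x) \<le> 2 * exp (l * d) * d * \<epsilon>"
proof -
  have fI: "integrable M f" using l1_limD(1)[OF f] .
  have d0: "0 \<le> d" using d by simp
  let ?G = "\<lambda>n x. T d (F n) x - exp (l * d) * F n x + exp (l * d) * d * g x"
  let ?L = "\<lambda>x. T d f x - exp (l * d) * f x + exp (l * d) * d * g x"
  have lim: "l1_lim M ?G ?L sequentially"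
  proof -
    have a: "l1_lim M (\<lambda>n. T d (F n)) (T d f) sequentially" by (rule op_l1_lim[OF sg_op[OF T d0] f])
    have b: "l1_lim M (\<lambda>n x. 1 * T d (F n) x + (- exp (l * d)) * F n x) (\<lambda>x. 1 * T d f x + (- exp (l * d)) * f x) sequentially"
      by (rule l1_lim_lin[OF a f])
    have c: "l1_lim M (\<lambda>n x. 1 * (1 * T d (F n) x + (- exp (l * d)) * F n x) + (exp (l * d) * d) * g x)
        (\<lambda>x. 1 * (1 * T d f x + (- exp (l * d)) * f x) + (exp (l * d) * d) * g x) sequentially"
      by (rule l1_lim_lin[OF b l1_lim_const[OF g]])
    have e1: "(\<lambda>n x. 1 * (1 * T d (F n) x + (- exp (l * d)) * F n x) + (exp (l * d) * d) * g x) = ?G"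
      by (intro ext) simp
    have e2: "(\<lambda>x. 1 * (1 * T d f x + (- exp (l * d)) * f x) + (exp (l * d) * d) * g x) = ?L"
      by (intro ext) simp
    show ?thesis using c unfolding e1 e2 .
  qed
  obtain N2 where N2: "\<forall>n\<ge>N2. exp (- l * real n) * (Cn * l1norm M g) < d * \<epsilon>"
    using exp_small[of "d * \<epsilon>" "Cn * l1norm M g"] d \<epsilon> Cn_pos l1norm_nonneg[of M g] by auto
  have bound: "\<forall>\<^sub>F n in sequentially. l1norm M (?G n) \<le> 2 * exp (l * d) * d * \<epsilon>"
    using eventually_ge_at_top[of "max p N2"]
  proof eventually_elim
    case (elim n)
    define D :: nat where "D = j * 2 ^ (n - p)"
    define N :: nat where "N = n * 2 ^ n"
    have Dd: "real D * dy n = d" unfolding D_def d(1) using dy_mult[of p n] elim by (simp add: algebra_simps)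
    have sh: "AE x in M. T d (Rs n N) x = exp (l * d) * (Rs n (N + D) x - Rs n D x)"
      using Rs_shift[of D n N] unfolding Dd .
    have "AE x in M. ?G n x = exp (l * d) * ((Rs n (N + D) x - Rs n N x) - (Rs n D x - d * g x))"
      using sh unfolding F_def N_def[symmetric] by eventually_elim (simp add: algebra_simps)
    then have "l1norm M (?G n) = l1norm M (\<lambda>x. exp (l * d) * ((Rs n (N + D) x - Rs n N x) - (Rs n D x - d * g x)))"
      using F_int Rs_int g sg_int[OF T d0 F_int] by (intro l1norm_cong) auto
    also have "\<dots> = exp (l * d) * l1norm M (\<lambda>x. (Rs n (N + D) x - Rs n N x) - (Rs n D x - d * g x))"
      by (simp add: l1norm_scale)
    also have "\<dots> \<le> exp (l * d) * (l1norm M (\<lambda>x. Rs n (N + D) x - Rs n N x) + l1norm M (\<lambda>x. - (Rs n D x - d * g x)))"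
    proof (rule mult_left_mono)
      have "l1norm M (\<lambda>x. (Rs n (N + D) x - Rs n N x) + (- (Rs n D x - d * g x)))
        \<le> l1norm M (\<lambda>x. Rs n (N + D) x - Rs n N x) + l1norm M (\<lambda>x. - (Rs n D x - d * g x))"
        using Rs_int g by (intro l1norm_triangle) auto
      then show "l1norm M (\<lambda>x. (Rs n (N + D) x - Rs n N x) - (Rs n D x - d * g x))
        \<le> l1norm M (\<lambda>x. Rs n (N + D) x - Rs n N x) + l1norm M (\<lambda>x. - (Rs n D x - d * g x))"
        by (simp only: diff_conv_add_uminus)
    qed simp
    also have "\<dots> \<le> exp (l * d) * (exp (- l * real n) * Cn * l1norm M g + d * \<epsilon>)"
    proof (rule mult_left_mono[OF add_mono])
      show "l1norm M (\<lambda>x. Rs n (N + D) x - Rs n N x) \<le> exp (- l * real n) * Cn * l1norm M g"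
        using Rs_tail[of N "N + D" n] unfolding N_def dyN by simp
      have "l1norm M (\<lambda>x. - (Rs n D x - d * g x)) = l1norm M (\<lambda>x. Rs n D x - (real D * dy n) * g x)"
        unfolding Dd using l1norm_minus_commute[of M "\<lambda>x. d * g x" "Rs n D"] by simp
      also have "\<dots> \<le> (real D * dy n) * \<epsilon>" using Rs_near[OF \<eta>, of D n] Dd d by linarith
      finally show "l1norm M (\<lambda>x. - (Rs n D x - d * g x)) \<le> d * \<epsilon>" unfolding Dd .
    qed simp
    also have "\<dots> \<le> exp (l * d) * (d * \<epsilon> + d * \<epsilon>)"
      using N2 elim by (intro mult_left_mono add_right_mono) (auto simp: mult.assoc intro: less_imp_le)
    finally show ?case by (simp add: algebra_simps)
  qed
  show ?thesis by (rule l1_lim_norm_le[OF _ lim bound]) simp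
qed

lemma l1norm_tri3:
  assumes "integrable M a" "integrable M b" "integrable M c"
  shows "l1norm M (\<lambda>x. a x + b x + c x) \<le> l1norm M a + l1norm M b + l1norm M c"
proof -
  have "l1norm M (\<lambda>x. (a x + b x) + c x) \<le> l1norm M (\<lambda>x. a x + b x) + l1norm M c"
    using assms by (intro l1norm_triangle) auto
  also have "\<dots> \<le> l1norm M a + l1norm M b + l1norm M c"
    using l1norm_triangle[OF assms(1,2)] by simp
  finally show ?thesis .
qed

lemma exp_quot_lim: "((\<lambda>d. (exp (l * d) - 1) / d) \<longlongrightarrow> l) (at_right 0)"
proof -
  have "((\<lambda>d. exp (l * d)) has_real_derivative exp (l * 0) * l) (at 0)"
    by (auto intro!: derivative_eq_intros)
  then have "((\<lambda>y. (exp (l * y) - exp (l * 0)) / (y - 0)) \<longlongrightarrow> l) (at 0)"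
    unfolding has_field_derivative_iff by simp
  then have "((\<lambda>d. (exp (l * d) - 1) / d) \<longlongrightarrow> l) (at 0)" by simp
  then show ?thesis by (rule tendsto_mono[OF at_le[OF subset_UNIV]])
qed

lemma small_d:
  assumes \<epsilon>: "\<epsilon> > 0" and A: "A \<ge> 0" and B: "B \<ge> 0"
  shows "\<exists>\<eta>3>0. \<forall>d. 0 < d \<and> d < \<eta>3 \<longrightarrow> exp (l * d) \<le> 2 \<and> \<bar>(exp (l * d) - 1) / d - l\<bar> * A \<le> \<epsilon>
     \<and> (exp (l * d) - 1) * B \<le> \<epsilon>"
proof -
  have c1: "((\<lambda>d. exp (l * d)) \<longlongrightarrow> 1) (at_right 0)"
  proof -
    have "((\<lambda>d. exp (l * d)) \<longlongrightarrow> exp (l * 0)) (at_right 0)"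
      by (intro tendsto_intros)
    then show ?thesis by simp
  qed
  have e1: "\<forall>\<^sub>F d in at_right 0. exp (l * d) < 2" using order_tendstoD(2)[OF c1] by simp
  have c2: "((\<lambda>d. \<bar>(exp (l * d) - 1) / d - l\<bar> * A) \<longlongrightarrow> \<bar>l - l\<bar> * A) (at_right 0)"
    by (intro tendsto_intros exp_quot_lim)
  have e2: "\<forall>\<^sub>F d in at_right 0. \<bar>(exp (l * d) - 1) / d - l\<bar> * A < \<epsilon>"
    using order_tendstoD(2)[OF c2] \<epsilon> by simp
  have c3: "((\<lambda>d. (exp (l * d) - 1) * B) \<longlongrightarrow> (1 - 1) * B) (at_right 0)"
    by (intro tendsto_intros c1)
  have e3: "\<forall>\<^sub>F d in at_right 0. (exp (l * d) - 1) * B < \<epsilon>"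
    using order_tendstoD(2)[OF c3] \<epsilon> by simp
  have "\<forall>\<^sub>F d in at_right 0. exp (l * d) \<le> 2 \<and> \<bar>(exp (l * d) - 1) / d - l\<bar> * A \<le> \<epsilon> \<and> (exp (l * d) - 1) * B \<le> \<epsilon>"
    using e1 e2 e3 by eventually_elim auto
  then show ?thesis unfolding eventually_at_right_field by auto
qed

lemma Phi_bound:
  assumes f: "l1_lim M F f sequentially"
    and \<eta>: "\<forall>s. 0 \<le> s \<and> s < \<eta> \<longrightarrow> l1norm M (\<lambda>x. exp (- l * s) * T s g x - g x) < \<epsilon>"
    and \<epsilon>: "\<epsilon> > 0" and d: "d = real j * dy p" "0 < d" "d \<le> \<eta>"
    and sm: "exp (l * d) \<le> 2" "\<bar>(exp (l * d) - 1) / d - l\<bar> * l1norm M f \<le> \<epsilon>" "(exp (l * d) - 1) * l1norm M g \<le> \<epsilon>"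
  shows "l1norm M (\<lambda>x. (T d f x - f x) / d - (l * f x - g x)) \<le> 6 * \<epsilon>"
proof -
  have fI: "integrable M f" using l1_limD(1)[OF f] .
  have d0: "0 \<le> d" using d by simp
  define e where "e = exp (l * d)"
  have e1: "1 \<le> e" unfolding e_def using l d by simp
  let ?a = "\<lambda>x. (1 / d) * (T d f x - e * f x + e * d * g x)"
  let ?b = "\<lambda>x. ((e - 1) / d - l) * f x"
  let ?c = "\<lambda>x. (1 - e) * g x"
  have eq: "(\<lambda>x. (T d f x - f x) / d - (l * f x - g x)) = (\<lambda>x. ?a x + ?b x + ?c x)"
  proof
    fix x
    have dn: "d \<noteq> 0" using d(2) by simp
    show "(T d f x - f x) / d - (l * f x - g x) = ?a x + ?b x + ?c x"
      using dn by (simp add: field_simps)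
  qed
  have TdI: "integrable M (T d f)" using sg_int[OF T d0 fI] .
  have "l1norm M (\<lambda>x. (T d f x - f x) / d - (l * f x - g x)) \<le> l1norm M ?a + l1norm M ?b + l1norm M ?c"
    unfolding eq using TdI fI g by (intro l1norm_tri3) auto
  also have "l1norm M ?a = (1 / d) * l1norm M (\<lambda>x. T d f x - e * f x + e * d * g x)"
    using l1norm_scale[of M "1/d" "\<lambda>x. T d f x - e * f x + e * d * g x"] d(2) by simp
  also have "\<dots> \<le> (1 / d) * (2 * e * d * \<epsilon>)"
    using dyadic_est[OF f \<eta> \<epsilon> d] d unfolding e_def by (intro mult_left_mono) auto
  also have "(1 / d) * (2 * e * d * \<epsilon>) = 2 * e * \<epsilon>" using d(2) by simp
  also have "\<dots> \<le> 4 * \<epsilon>" using sm(1) \<epsilon> unfolding e_def by simp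
  also have "l1norm M ?b \<le> \<epsilon>" using sm(2) unfolding e_def by (simp add: l1norm_scale)
  also have "l1norm M ?c = (e - 1) * l1norm M g" using e1 by (simp add: l1norm_scale)
  also have "\<dots> \<le> \<epsilon>" using sm(3) unfolding e_def .
  finally show ?thesis by simp
qed

lemma F_gen:
  assumes f: "l1_lim M F f sequentially"
  shows "has_gen M T f (\<lambda>x. l * f x - g x)"
proof -
  have fI: "integrable M f" using l1_limD(1)[OF f] .
  define c where "c = (\<lambda>x. l * f x - g x)"
  have cI: "integrable M c" unfolding c_def using fI g by auto
  have cn: "0 \<le> l1norm M c" by (rule l1norm_nonneg)
  have main: "\<forall>\<^sub>F h in at_right 0. l1norm M (\<lambda>x. (T h f x - f x) / h - c x) < \<tau>" if \<tau>: "\<tau> > 0" for \<tau>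
  proof -
    define \<epsilon> where "\<epsilon> = \<tau> / 16"
    have \<epsilon>: "\<epsilon> > 0" unfolding \<epsilon>_def using \<tau> by simp
    obtain \<eta> where \<eta>: "\<eta> > 0" "\<forall>s. 0 \<le> s \<and> s < \<eta> \<longrightarrow> l1norm M (\<lambda>x. exp (- l * s) * T s g x - g x) < \<epsilon>"
      using near_g[OF \<epsilon>] by blast
    obtain \<eta>3 where \<eta>3: "\<eta>3 > 0" "\<forall>d. 0 < d \<and> d < \<eta>3 \<longrightarrow> exp (l * d) \<le> 2 \<and>
        \<bar>(exp (l * d) - 1) / d - l\<bar> * l1norm M f \<le> \<epsilon> \<and> (exp (l * d) - 1) * l1norm M g \<le> \<epsilon>"
      using small_d[OF \<epsilon> l1norm_nonneg l1norm_nonneg] by blast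
    have "l1norm M (\<lambda>x. (T h f x - f x) / h - c x) < \<tau>" if h: "0 < h" "h < min \<eta> \<eta>3" for h
    proof -
      have h\<epsilon>: "h * \<epsilon> > 0" using h \<epsilon> by simp
      obtain \<rho> where \<rho>: "\<rho> > 0" "\<forall>r. 0 \<le> r \<and> r < \<rho> \<longrightarrow> l1norm M (\<lambda>x. T r f x - f x) < h * \<epsilon>"
        using sg_cont_eps[OF T fI h\<epsilon>] by blast
      define b where "b = min \<rho> (min (h * \<epsilon> / (l1norm M c + 1)) (h / 2))"
      have b: "b > 0" unfolding b_def using \<rho> h\<epsilon> h cn by simp
      obtain p where p: "dy p < b" using dy_small[OF b] by blast
      define j where "j = nat \<lfloor>h / dy p\<rfloor>"
      define d where "d = real j * dy p"
      have dp: "0 < dy p" by (rule dy_pos)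
      have rj: "real j = of_int \<lfloor>h / dy p\<rfloor>" unfolding j_def using h dp by simp
      have d_le: "d \<le> h"
      proof -
        have "real j \<le> h / dy p" unfolding rj by simp
        then show ?thesis unfolding d_def using dp by (simp add: field_simps)
      qed
      have d_gt: "h - d < dy p"
      proof -
        have "h / dy p < real j + 1" unfolding rj by linarith
        then have "h < (real j + 1) * dy p" using dp by (simp add: field_simps)
        then show ?thesis unfolding d_def by (simp add: algebra_simps)
      qed
      have pb: "dy p < h / 2" "dy p < \<rho>" "dy p < h * \<epsilon> / (l1norm M c + 1)" using p unfolding b_def by auto
      have d_pos: "0 < d" using d_gt pb(1) h(1) by linarith
      define r where "r = h - d"
      have r: "0 \<le> r" "r < \<rho>" unfolding r_def using d_le d_gt pb by auto
      have d0: "0 \<le> d" using d_pos by simp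
      have TdI: "integrable M (T d f)" using sg_int[OF T d0 fI] .
      have TrI: "integrable M (T r f)" using sg_int[OF T r(1) fI] .
      have ThI: "integrable M (T h f)" using sg_int[OF T _ fI] h by simp
      have hdr: "h = d + r" unfolding r_def by simp
      have AEh: "AE x in M. T h f x = T d (T r f) x" unfolding hdr by (rule sg_add[OF T d0 r(1) fI])
      have n1: "l1norm M (\<lambda>x. T h f x - T d f x) < h * \<epsilon>"
      proof -
        have "l1norm M (\<lambda>x. T h f x - T d f x) = l1norm M (\<lambda>x. T d (T r f) x - T d f x)"
          using AEh ThI TdI sg_int[OF T d0 TrI] by (intro l1norm_cong) (auto elim!: eventually_mono)
        also have "\<dots> \<le> l1norm M (\<lambda>x. T r f x - f x)"
          by (rule op_diff_norm[OF sg_op[OF T d0] TrI fI])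
        also have "\<dots> < h * \<epsilon>" using \<rho>(2) r by blast
        finally show ?thesis .
      qed
      have Phi: "l1norm M (\<lambda>x. (T d f x - f x) / d - c x) \<le> 6 * \<epsilon>"
        unfolding c_def
      proof (rule Phi_bound[OF f \<eta>(2) \<epsilon> d_def d_pos])
        show "d \<le> \<eta>" using d_le h by simp
        have "0 < d \<and> d < \<eta>3" using d_pos d_le h by simp
        then show "exp (l * d) \<le> 2" "\<bar>(exp (l * d) - 1) / d - l\<bar> * l1norm M f \<le> \<epsilon>"
          "(exp (l * d) - 1) * l1norm M g \<le> \<epsilon>" using \<eta>3(2) by blast+
      qed
      let ?a = "\<lambda>x. (1 / h) * (T h f x - T d f x)"
      let ?b = "\<lambda>x. (d / h) * ((T d f x - f x) / d - c x)"
      let ?c = "\<lambda>x. (d / h - 1) * c x"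
      have eq: "(\<lambda>x. (T h f x - f x) / h - c x) = (\<lambda>x. ?a x + ?b x + ?c x)"
      proof
        fix x
        have "h \<noteq> 0" "d \<noteq> 0" using h d_pos by auto
        then show "(T h f x - f x) / h - c x = ?a x + ?b x + ?c x" by (simp add: field_simps)
      qed
      have "l1norm M (\<lambda>x. (T h f x - f x) / h - c x) \<le> l1norm M ?a + l1norm M ?b + l1norm M ?c"
        unfolding eq using ThI TdI fI cI by (intro l1norm_tri3) auto
      also have "l1norm M ?a = (1 / h) * l1norm M (\<lambda>x. T h f x - T d f x)"
        using l1norm_scale[of M "1/h" "\<lambda>x. T h f x - T d f x"] h by simp
      also have "\<dots> \<le> (1 / h) * (h * \<epsilon>)" using n1 h by (intro mult_left_mono) auto
      also have "(1 / h) * (h * \<epsilon>) = \<epsilon>" using h by simp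
      also have "l1norm M ?b = (d / h) * l1norm M (\<lambda>x. (T d f x - f x) / d - c x)"
        using l1norm_scale[of M "d/h" "\<lambda>x. (T d f x - f x) / d - c x"] h d_pos by simp
      also have "\<dots> \<le> 1 * (6 * \<epsilon>)"
        using Phi d_le h d_pos l1norm_nonneg[of M "\<lambda>x. (T d f x - f x) / d - c x"]
        by (intro mult_mono) (auto simp: divide_le_eq_1)
      also have "l1norm M ?c = \<bar>d / h - 1\<bar> * l1norm M c" by (simp add: l1norm_scale)
      also have "\<dots> \<le> \<epsilon>"
      proof -
        have "\<bar>d / h - 1\<bar> = (h - d) / h" using d_le h by (simp add: field_simps abs_if)
        also have "\<dots> \<le> (h * \<epsilon> / (l1norm M c + 1)) / h"
          using d_gt pb(3) h by (intro divide_right_mono) auto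
        also have "\<dots> = \<epsilon> / (l1norm M c + 1)" using h by simp
        finally have "\<bar>d / h - 1\<bar> * l1norm M c \<le> \<epsilon> / (l1norm M c + 1) * l1norm M c"
          using cn by (rule mult_right_mono)
        also have "\<dots> \<le> \<epsilon>" using cn \<epsilon> by (simp add: field_simps)
        finally show ?thesis .
      qed
      finally show ?thesis unfolding \<epsilon>_def using \<tau> by simp
    qed
    moreover have "0 < min \<eta> \<eta>3" using \<eta> \<eta>3 by simp
    ultimately show ?thesis unfolding eventually_at_right_field by blast
  qed
  have "((\<lambda>h. l1norm M (\<lambda>x. (T h f x - f x) / h - c x)) \<longlongrightarrow> 0) (at_right 0)"
  proof (rule order_tendstoI)
    fix a :: real assume "a < 0"
    then show "\<forall>\<^sub>F h in at_right 0. a < l1norm M (\<lambda>x. (T h f x - f x) / h - c x)"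
      by (intro always_eventually allI less_le_trans[OF _ l1norm_nonneg])
  next
    fix a :: real assume "0 < a" then show "\<forall>\<^sub>F h in at_right 0. l1norm M (\<lambda>x. (T h f x - f x) / h - c x) < a"
      by (rule main)
  qed
  then show ?thesis unfolding has_gen_def c_def using fI cI unfolding c_def by simp
qed

lemma res_exists:
  "\<exists>f. has_gen M T f (\<lambda>x. l * f x - g x) \<and> ((AE x in M. 0 \<le> g x) \<longrightarrow> (AE x in M. 0 \<le> f x))"
proof -
  obtain f where f: "l1_lim M F f sequentially" by (rule F_lim)
  have "(AE x in M. 0 \<le> g x) \<longrightarrow> (AE x in M. 0 \<le> f x)"
  proof
    assume "AE x in M. 0 \<le> g x"
    then have "\<forall>\<^sub>F n in sequentially. AE x in M. 0 \<le> F n x" using F_nonneg by simp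
    from l1_lim_ge_const[OF _ f _ this] show "AE x in M. 0 \<le> f x" by simp
  qed
  with F_gen[OF f] show ?thesis by blast
qed

end



context
  fixes M :: "'a measure" and T :: "real \<Rightarrow> ('a \<Rightarrow> real) \<Rightarrow> ('a \<Rightarrow> real)"
  assumes T: "substochastic_sg M T"
begin

lemma has_genD:
  assumes "has_gen M T f c"
  shows "integrable M f" "integrable M c"
    "((\<lambda>h. l1norm M (\<lambda>x. (T h f x - f x) / h - c x)) \<longlongrightarrow> 0) (at_right 0)"
  using assms unfolding has_gen_def by auto

lemma has_gen_cong:
  assumes g: "has_gen M T f c" and f': "integrable M f'" and c': "integrable M c'"
    and ef: "AE x in M. f x = f' x" and ec: "AE x in M. c x = c' x"
  shows "has_gen M T f' c'"
proof -
  note gd = has_genD[OF g]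
  have "\<forall>\<^sub>F h in at_right 0. l1norm M (\<lambda>x. (T h f x - f x) / h - c x) = l1norm M (\<lambda>x. (T h f' x - f' x) / h - c' x)"
  proof -
    have "\<forall>\<^sub>F h in at_right (0::real). 0 < h" by (simp add: eventually_at_right_less)
    then show ?thesis
    proof eventually_elim
      case (elim h)
      have h0: "0 \<le> h" using elim by simp
      have "AE x in M. T h f x = T h f' x" by (rule op_cong[OF sg_op[OF T h0] gd(1) ef])
      with ef ec have "AE x in M. (T h f x - f x) / h - c x = (T h f' x - f' x) / h - c' x"
        by eventually_elim simp
      then show ?case
        using sg_int[OF T h0 gd(1)] sg_int[OF T h0 f'] gd f' c' by (intro l1norm_cong) auto
    qed
  qed
  from Lim_transform_eventually[OF gd(3) this] show ?thesis unfolding has_gen_def using f' c' by simp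
qed

lemma has_gen_lin:
  assumes g1: "has_gen M T f1 c1" and g2: "has_gen M T f2 c2"
  shows "has_gen M T (\<lambda>x. a * f1 x + b * f2 x) (\<lambda>x. a * c1 x + b * c2 x)"
proof -
  note d1 = has_genD[OF g1] and d2 = has_genD[OF g2]
  let ?f = "\<lambda>x. a * f1 x + b * f2 x" and ?c = "\<lambda>x. a * c1 x + b * c2 x"
  have ev: "\<forall>\<^sub>F h in at_right 0. l1norm M (\<lambda>x. (T h ?f x - ?f x) / h - ?c x)
     \<le> \<bar>a\<bar> * l1norm M (\<lambda>x. (T h f1 x - f1 x) / h - c1 x) + \<bar>b\<bar> * l1norm M (\<lambda>x. (T h f2 x - f2 x) / h - c2 x)"
  proof -
    have "\<forall>\<^sub>F h in at_right (0::real). 0 < h" by (simp add: eventually_at_right_less)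
    then show ?thesis
    proof eventually_elim
      case (elim h)
      have h0: "0 \<le> h" using elim by simp
      have I1: "integrable M (T h f1)" "integrable M (T h f2)" using sg_int[OF T h0] d1 d2 by auto
      have "AE x in M. T h ?f x = a * T h f1 x + b * T h f2 x" by (rule op_lin[OF sg_op[OF T h0] d1(1) d2(1)])
      then have "AE x in M. (T h ?f x - ?f x) / h - ?c x
          = a * ((T h f1 x - f1 x) / h - c1 x) + b * ((T h f2 x - f2 x) / h - c2 x)"
        by eventually_elim (simp add: diff_divide_distrib add_divide_distrib algebra_simps)
      then have "l1norm M (\<lambda>x. (T h ?f x - ?f x) / h - ?c x)
          = l1norm M (\<lambda>x. a * ((T h f1 x - f1 x) / h - c1 x) + b * ((T h f2 x - f2 x) / h - c2 x))"
        using sg_int[OF T h0, of ?f] d1 d2 I1 by (intro l1norm_cong) auto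
      also have "\<dots> \<le> l1norm M (\<lambda>x. a * ((T h f1 x - f1 x) / h - c1 x)) + l1norm M (\<lambda>x. b * ((T h f2 x - f2 x) / h - c2 x))"
        using d1 d2 I1 by (intro l1norm_triangle) auto
      also have "\<dots> = \<bar>a\<bar> * l1norm M (\<lambda>x. (T h f1 x - f1 x) / h - c1 x) + \<bar>b\<bar> * l1norm M (\<lambda>x. (T h f2 x - f2 x) / h - c2 x)"
        by (simp add: l1norm_scale)
      finally show ?case .
    qed
  qed
  have "((\<lambda>h. l1norm M (\<lambda>x. (T h ?f x - ?f x) / h - ?c x)) \<longlongrightarrow> 0) (at_right 0)"
  proof (rule tendsto_sandwich[OF _ ev tendsto_const])
    show "\<forall>\<^sub>F h in at_right 0. 0 \<le> l1norm M (\<lambda>x. (T h ?f x - ?f x) / h - ?c x)" by (simp add: l1norm_nonneg)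
    show "((\<lambda>h. \<bar>a\<bar> * l1norm M (\<lambda>x. (T h f1 x - f1 x) / h - c1 x) + \<bar>b\<bar> * l1norm M (\<lambda>x. (T h f2 x - f2 x) / h - c2 x)) \<longlongrightarrow> 0) (at_right 0)"
      using tendsto_add[OF tendsto_mult_right_zero[OF d1(3)] tendsto_mult_right_zero[OF d2(3)]] by simp
  qed
  then show ?thesis unfolding has_gen_def using d1 d2 by auto
qed

lemma dissipative:
  assumes g: "has_gen M T f c" and l: "l > 0"
  shows "l * l1norm M f \<le> l1norm M (\<lambda>x. l * f x - c x)"
proof (rule field_le_epsilon)
  fix e :: real assume e: "0 < e"
  note d = has_genD[OF g]
  have "\<forall>\<^sub>F h in at_right (0::real). 0 < h \<and> l1norm M (\<lambda>x. (T h f x - f x) / h - c x) < e"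
    using eventually_at_right_less[of 0] order_tendstoD(2)[OF d(3) e] by eventually_elim auto
  from eventually_happens'[OF trivial_limit_at_right_real this]
  obtain h where h: "0 < h" "l1norm M (\<lambda>x. (T h f x - f x) / h - c x) < e" by blast
  have h0: "0 \<le> h" using h by simp
  have ThI: "integrable M (T h f)" using sg_int[OF T h0 d(1)] .
  have "(1 + l * h) * l1norm M f = l1norm M (\<lambda>x. (1 + l * h) * f x)"
    using l h by (simp add: l1norm_scale)
  also have "\<dots> = l1norm M (\<lambda>x. ((1 + l * h) * f x - T h f x) + T h f x)" by simp
  also have "\<dots> \<le> l1norm M (\<lambda>x. (1 + l * h) * f x - T h f x) + l1norm M (T h f)"
    using d ThI by (intro l1norm_triangle) auto
  also have "\<dots> \<le> l1norm M (\<lambda>x. (1 + l * h) * f x - T h f x) + l1norm M f"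
    using sg_contr[OF T h0 d(1)] by simp
  finally have A: "l * h * l1norm M f \<le> l1norm M (\<lambda>x. (1 + l * h) * f x - T h f x)"
    by (simp add: algebra_simps)
  have "l1norm M (\<lambda>x. (1 + l * h) * f x - T h f x) = l1norm M (\<lambda>x. h * (l * f x - (T h f x - f x) / h))"
    using h by (intro arg_cong[where f="l1norm M"] ext) (simp add: field_simps)
  also have "\<dots> = h * l1norm M (\<lambda>x. (l * f x - c x) - ((T h f x - f x) / h - c x))"
    using h by (simp add: l1norm_scale)
  also have "\<dots> \<le> h * (l1norm M (\<lambda>x. l * f x - c x) + l1norm M (\<lambda>x. (T h f x - f x) / h - c x))"
  proof (rule mult_left_mono)
    have "l1norm M (\<lambda>x. (l * f x - c x) + (- ((T h f x - f x) / h - c x)))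
        \<le> l1norm M (\<lambda>x. l * f x - c x) + l1norm M (\<lambda>x. - ((T h f x - f x) / h - c x))"
      using d ThI by (intro l1norm_triangle) auto
    moreover have "l1norm M (\<lambda>x. - ((T h f x - f x) / h - c x)) = l1norm M (\<lambda>x. (T h f x - f x) / h - c x)"
      unfolding l1norm_def by (simp only: abs_minus_cancel)
    ultimately show "l1norm M (\<lambda>x. (l * f x - c x) - ((T h f x - f x) / h - c x))
        \<le> l1norm M (\<lambda>x. l * f x - c x) + l1norm M (\<lambda>x. (T h f x - f x) / h - c x)"
      by (simp only: diff_conv_add_uminus)
  qed (use h in simp)
  finally have "l * h * l1norm M f \<le> h * (l1norm M (\<lambda>x. l * f x - c x) + e)"
    using A h(2) h(1) by (smt (verit) mult_left_mono)
  then show "l * l1norm M f \<le> l1norm M (\<lambda>x. l * f x - c x) + e"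
    using h(1) by (simp add: mult.commute mult.left_commute)
qed

lemma gen_unique:
  assumes g1: "has_gen M T f1 c1" and g2: "has_gen M T f2 c2" and l: "l > 0"
    and eq: "AE x in M. l * f1 x - c1 x = l * f2 x - c2 x"
  shows "AE x in M. f1 x = f2 x"
proof -
  have g: "has_gen M T (\<lambda>x. 1 * f1 x + (-1) * f2 x) (\<lambda>x. 1 * c1 x + (-1) * c2 x)"
    by (rule has_gen_lin[OF g1 g2])
  note d1 = has_genD[OF g1] and d2 = has_genD[OF g2]
  have "l * l1norm M (\<lambda>x. 1 * f1 x + (-1) * f2 x) \<le> l1norm M (\<lambda>x. l * (1 * f1 x + (-1) * f2 x) - (1 * c1 x + (-1) * c2 x))"
    by (rule dissipative[OF g l])
  also have "\<dots> = l1norm M (\<lambda>x. 0)"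
    using eq d1 d2 by (intro l1norm_cong) (auto elim!: eventually_mono simp: algebra_simps)
  also have "\<dots> = 0" by (simp add: l1norm_def)
  finally have "l1norm M (\<lambda>x. f1 x - f2 x) \<le> 0" using l by (simp add: mult_le_0_iff)
  then have "l1norm M (\<lambda>x. f1 x - f2 x) = 0" using l1norm_nonneg[of M] by (metis order_antisym)
  from l1norm_zero[OF _ this] d1 d2 show ?thesis by (auto elim!: eventually_mono)
qed

lemma gen_deriv_unique:
  assumes g1: "has_gen M T f c1" and g2: "has_gen M T f c2"
  shows "AE x in M. c1 x = c2 x"
proof -
  note d1 = has_genD[OF g1] and d2 = has_genD[OF g2]
  have "AE x in M. c2 x - c1 x = 0"
  proof (rule ae_eq_small)
    show "integrable M (\<lambda>x. c2 x - c1 x)" using d1 d2 by auto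
    fix e :: real assume e: "e > 0"
    have "\<forall>\<^sub>F h in at_right (0::real). 0 < h \<and> l1norm M (\<lambda>x. (T h f x - f x) / h - c1 x) < e/2
        \<and> l1norm M (\<lambda>x. (T h f x - f x) / h - c2 x) < e/2"
      using eventually_at_right_less[of 0] order_tendstoD(2)[OF d1(3) half_gt_zero[OF e]] order_tendstoD(2)[OF d2(3) half_gt_zero[OF e]]
      by eventually_elim auto
    from eventually_happens'[OF trivial_limit_at_right_real this]
    obtain h where h: "0 < h" "l1norm M (\<lambda>x. (T h f x - f x) / h - c1 x) < e/2"
        "l1norm M (\<lambda>x. (T h f x - f x) / h - c2 x) < e/2" by blast
    have h0: "0 \<le> h" using h by simp
    have DI: "integrable M (\<lambda>x. (T h f x - f x) / h)" using sg_int[OF T h0 d1(1)] d1 by auto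
    have "l1norm M (\<lambda>x. c2 x - c1 x) \<le> l1norm M (\<lambda>x. c2 x - (T h f x - f x) / h) + l1norm M (\<lambda>x. (T h f x - f x) / h - c1 x)"
      using d1 d2 DI by (intro l1norm_triangle3) auto
    also have "\<dots> < e/2 + e/2" using h l1norm_minus_commute[of M c2 "\<lambda>x. (T h f x - f x) / h"] by simp
    finally show "l1norm M (\<lambda>x. c2 x - c1 x) < e" by simp
  qed
  then show ?thesis by eventually_elim simp
qed

context
  fixes l :: real
  assumes l: "l > 0"
begin

lemma res_is: "integrable M g \<Longrightarrow> is_res M T l g (resolvent M T l g)"
proof -
  assume g: "integrable M g"
  obtain f where f: "has_gen M T f (\<lambda>x. l * f x - g x)" using res_exists[OF T l g] by blast
  have "is_res M T l g f" unfolding is_res_def using f by (intro exI[of _ "\<lambda>x. l * f x - g x"]) simp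
  from someI[of "is_res M T l g", OF this] show ?thesis unfolding resolvent_def .
qed

lemma res_gen: "integrable M g \<Longrightarrow> has_gen M T (resolvent M T l g) (\<lambda>x. l * resolvent M T l g x - g x)"
proof -
  assume g: "integrable M g"
  from res_is[OF g] obtain h where h: "has_gen M T (resolvent M T l g) h"
    "AE x in M. l * resolvent M T l g x - h x = g x" unfolding is_res_def by blast
  note d = has_genD[OF h(1)]
  show ?thesis
    by (rule has_gen_cong[OF h(1) d(1)]) (use d g h(2) in \<open>auto elim!: eventually_mono\<close>)
qed

lemma res_int: "integrable M g \<Longrightarrow> integrable M (resolvent M T l g)"
  using has_genD(1)[OF res_gen] by blast

lemma res_char:
  assumes g: "integrable M g" and f: "has_gen M T f c" and eq: "AE x in M. l * f x - c x = g x"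
  shows "AE x in M. resolvent M T l g x = f x"
  by (rule gen_unique[OF res_gen[OF g] f l]) (use eq in \<open>auto elim!: eventually_mono\<close>)

lemma res_pos:
  assumes g: "integrable M g" and pos: "AE x in M. 0 \<le> g x"
  shows "AE x in M. 0 \<le> resolvent M T l g x"
proof -
  obtain f where f: "has_gen M T f (\<lambda>x. l * f x - g x)" "AE x in M. 0 \<le> f x"
    using res_exists[OF T l g] pos by blast
  have "AE x in M. resolvent M T l g x = f x" by (rule res_char[OF g f(1)]) simp
  with f(2) show ?thesis by eventually_elim simp
qed

lemma res_lin:
  assumes g1: "integrable M g1" and g2: "integrable M g2"
  shows "AE x in M. resolvent M T l (\<lambda>y. a * g1 y + b * g2 y) x = a * resolvent M T l g1 x + b * resolvent M T l g2 x"
proof (rule res_char)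
  show "integrable M (\<lambda>y. a * g1 y + b * g2 y)" using g1 g2 by auto
  show "has_gen M T (\<lambda>x. a * resolvent M T l g1 x + b * resolvent M T l g2 x)
      (\<lambda>x. a * (l * resolvent M T l g1 x - g1 x) + b * (l * resolvent M T l g2 x - g2 x))"
    by (rule has_gen_lin[OF res_gen[OF g1] res_gen[OF g2]])
qed (simp add: algebra_simps)

lemma res_cong:
  assumes g1: "integrable M g1" and g2: "integrable M g2" and eq: "AE x in M. g1 x = g2 x"
  shows "AE x in M. resolvent M T l g1 x = resolvent M T l g2 x"
  by (rule res_char[OF g1 res_gen[OF g2]]) (use eq in \<open>auto elim!: eventually_mono\<close>)

lemma res_zero_imp:
  assumes g: "integrable M g" and z: "AE x in M. resolvent M T l g x = 0"
  shows "AE x in M. g x = 0"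
proof -
  note gR = res_gen[OF g]
  have z1: "has_gen M T (\<lambda>x. 0) (\<lambda>x. l * resolvent M T l g x - g x)"
    by (rule has_gen_cong[OF gR]) (use z res_int[OF g] g in \<open>auto elim!: eventually_mono\<close>)
  have z2: "has_gen M T (\<lambda>x. 0) (\<lambda>x. 0)"
    using has_gen_lin[OF gR gR, of 0 0] by simp
  from gen_deriv_unique[OF z1 z2] z show ?thesis by eventually_elim simp
qed

end

lemma res_mono_l:
  assumes lm: "0 < l" "l < m" and g: "integrable M g" and pos: "AE x in M. 0 \<le> g x"
  shows "AE x in M. resolvent M T m g x \<le> resolvent M T l g x"
proof -
  have m: "0 < m" using lm by simp
  define u where "u = resolvent M T m g"
  define v where "v = resolvent M T l u"
  have uI: "integrable M u" unfolding u_def by (rule res_int[OF m g])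
  have upos: "AE x in M. 0 \<le> u x" unfolding u_def by (rule res_pos[OF m g pos])
  have vpos: "AE x in M. 0 \<le> v x" unfolding v_def by (rule res_pos[OF lm(1) uI upos])
  have gu: "has_gen M T u (\<lambda>x. m * u x - g x)" unfolding u_def by (rule res_gen[OF m g])
  have gv: "has_gen M T v (\<lambda>x. l * v x - u x)" unfolding v_def by (rule res_gen[OF lm(1) uI])
  have gf: "has_gen M T (\<lambda>x. 1 * u x + (m - l) * v x) (\<lambda>x. 1 * (m * u x - g x) + (m - l) * (l * v x - u x))"
    by (rule has_gen_lin[OF gu gv])
  have "AE x in M. resolvent M T l g x = 1 * u x + (m - l) * v x"
    by (rule res_char[OF lm(1) g gf]) (simp add: algebra_simps)
  with vpos show ?thesis by eventually_elim (insert lm, simp add: u_def)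
qed

end



lemma exp_bound_step:
  assumes T: "substochastic_sg M T" and g: "has_gen M T f c" and fpos: "AE x in M. 0 \<le> f x"
    and cle: "AE x in M. c x \<le> \<mu> * f x" and \<mu>: "0 \<le> \<mu>" and \<delta>: "0 < \<delta>"
  defines "e \<equiv> (\<lambda>x. (T \<delta> f x - f x) / \<delta> - c x)" and "a \<equiv> 1 + \<mu> * \<delta>"
  shows "\<exists>E. integrable M E \<and> (AE x in M. T (real k * \<delta>) f x - a ^ k * f x \<le> E x)
      \<and> l1norm M E \<le> real k * \<delta> * a ^ k * l1norm M e"
proof -
  note d = has_genD[OF T g]
  have d0: "0 \<le> \<delta>" using \<delta> by simp
  have a1: "1 \<le> a" unfolding a_def using \<mu> \<delta> by simp
  have eI: "integrable M e" unfolding e_def using d sg_int[OF T d0 d(1)] by auto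
  have TfI: "integrable M (T s f)" if "0 \<le> s" for s using sg_int[OF T that d(1)] .
  have step: "AE x in M. T \<delta> f x \<le> a * f x + \<delta> * e x"
    using cle
  proof eventually_elim
    case (elim x)
    have "T \<delta> f x = f x + \<delta> * c x + \<delta> * e x" unfolding e_def using \<delta> by (simp add: field_simps)
    also have "\<dots> \<le> f x + \<delta> * (\<mu> * f x) + \<delta> * e x" using elim \<delta> by (simp add: mult_left_mono)
    finally show ?case unfolding a_def by (simp add: algebra_simps)
  qed
  show ?thesis
  proof (induction k)
    case 0
    have "AE x in M. T (real 0 * \<delta>) f x - a ^ 0 * f x \<le> 0"
      using sg_0[OF T d(1)] by eventually_elim simp
    then show ?case by (intro exI[of _ "\<lambda>x. 0"]) (simp add: l1norm_def)
  next
    case (Suc k)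
    then obtain E where E: "integrable M E" "AE x in M. T (real k * \<delta>) f x - a ^ k * f x \<le> E x"
      "l1norm M E \<le> real k * \<delta> * a ^ k * l1norm M e" by blast
    define s where "s = real k * \<delta>"
    have s0: "0 \<le> s" unfolding s_def using \<delta> by simp
    define E' where "E' = (\<lambda>x. a * E x + \<delta> * T s e x)"
    have TeI: "integrable M (T s e)" using sg_int[OF T s0 eI] .
    have E'I: "integrable M E'" unfolding E'_def using E(1) TeI by auto
    have A1: "AE x in M. T (real (Suc k) * \<delta>) f x = T s (T \<delta> f) x"
    proof -
      have "real (Suc k) * \<delta> = s + \<delta>" unfolding s_def by (simp add: algebra_simps)
      then show ?thesis using sg_add[OF T s0 d0 d(1)] by simp
    qed
    have A2: "AE x in M. T s (T \<delta> f) x \<le> T s (\<lambda>y. a * f y + \<delta> * e y) x"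
      by (rule op_mono[OF sg_op[OF T s0] TfI[OF d0]]) (use d(1) eI step in auto)
    have A3: "AE x in M. T s (\<lambda>y. a * f y + \<delta> * e y) x = a * T s f x + \<delta> * T s e x"
      by (rule op_lin[OF sg_op[OF T s0] d(1) eI])
    have "AE x in M. T (real (Suc k) * \<delta>) f x - a ^ Suc k * f x \<le> E' x"
      using A1 A2 A3 E(2)
    proof eventually_elim
      case (elim x)
      have "T (real (Suc k) * \<delta>) f x \<le> a * T s f x + \<delta> * T s e x" using elim by simp
      also have "a * T s f x \<le> a * (a ^ k * f x + E x)"
        using elim(4) a1 unfolding s_def by (intro mult_left_mono) auto
      finally show ?case unfolding E'_def by (simp add: algebra_simps)
    qed
    moreover have "l1norm M E' \<le> real (Suc k) * \<delta> * a ^ Suc k * l1norm M e"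
    proof -
      have "l1norm M E' \<le> l1norm M (\<lambda>x. a * E x) + l1norm M (\<lambda>x. \<delta> * T s e x)"
        unfolding E'_def using E(1) TeI by (intro l1norm_triangle) auto
      also have "\<dots> = a * l1norm M E + \<delta> * l1norm M (T s e)"
        using a1 \<delta> by (simp add: l1norm_scale)
      also have "\<dots> \<le> a * (real k * \<delta> * a ^ k * l1norm M e) + \<delta> * (a ^ Suc k * l1norm M e)"
      proof (rule add_mono)
        show "a * l1norm M E \<le> a * (real k * \<delta> * a ^ k * l1norm M e)"
          using E(3) a1 by (intro mult_left_mono) auto
        have "l1norm M (T s e) \<le> l1norm M e" by (rule sg_contr[OF T s0 eI])
        also have "\<dots> \<le> a ^ Suc k * l1norm M e"
        proof -
          have "1 \<le> a ^ Suc k" using a1 by (rule one_le_power)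
          then have "1 * l1norm M e \<le> a ^ Suc k * l1norm M e" using l1norm_nonneg[of M e] by (rule mult_right_mono)
          then show ?thesis by simp
        qed
        finally show "\<delta> * l1norm M (T s e) \<le> \<delta> * (a ^ Suc k * l1norm M e)" using \<delta> by (intro mult_left_mono) auto
      qed
      also have "\<dots> = real (Suc k) * \<delta> * a ^ Suc k * l1norm M e" by (simp add: algebra_simps)
      finally show ?thesis .
    qed
    ultimately show ?case using E'I by blast
  qed
qed

lemma exp_bound:
  assumes T: "substochastic_sg M T" and g: "has_gen M T f c" and fpos: "AE x in M. 0 \<le> f x"
    and cle: "AE x in M. c x \<le> \<mu> * f x" and \<mu>: "0 \<le> \<mu>" and t: "0 \<le> t"
  shows "AE x in M. T t f x \<le> exp (\<mu> * t) * f x"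
proof (cases "t = 0")
  case True
  note d = has_genD[OF T g]
  show ?thesis unfolding True using sg_0[OF T d(1)] by eventually_elim simp
next
  case False
  then have t0: "0 < t" using t by simp
  note d = has_genD[OF T g]
  have "AE x in M. T t f x - exp (\<mu> * t) * f x \<le> 0"
  proof (rule ae_le_small)
    show "integrable M (\<lambda>x. T t f x - exp (\<mu> * t) * f x)" using sg_int[OF T t d(1)] d(1) by auto
    fix \<epsilon> :: real assume \<epsilon>: "\<epsilon> > 0"
    define K where "K = t * exp (\<mu> * t) + 1"
    have K: "K > 0" "t * exp (\<mu> * t) < K" unfolding K_def using t0 by (auto intro: add_pos_pos)
    have "\<forall>\<^sub>F h in at_right 0. l1norm M (\<lambda>x. (T h f x - f x) / h - c x) < \<epsilon> / K"
      using order_tendstoD(2)[OF d(3)] \<epsilon> K by simp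
    then obtain b where b: "b > 0" "\<And>h. 0 < h \<Longrightarrow> h < b \<Longrightarrow> l1norm M (\<lambda>x. (T h f x - f x) / h - c x) < \<epsilon> / K"
      unfolding eventually_at_right_field by auto
    obtain n :: nat where n: "t / b < real n" using reals_Archimedean2 by blast
    have npos: "0 < real n" using n t0 b by (smt (verit) divide_pos_pos)
    define \<delta> where "\<delta> = t / real n"
    have \<delta>: "0 < \<delta>" "\<delta> < b" unfolding \<delta>_def using t0 npos n b by (auto simp: field_simps)
    define a where "a = 1 + \<mu> * \<delta>"
    define e where "e = (\<lambda>x. (T \<delta> f x - f x) / \<delta> - c x)"
    obtain E where E: "integrable M E" "AE x in M. T (real n * \<delta>) f x - a ^ n * f x \<le> E x"
      "l1norm M E \<le> real n * \<delta> * a ^ n * l1norm M e"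
      using exp_bound_step[OF T g fpos cle \<mu> \<delta>(1), of n] unfolding a_def e_def by blast
    have nd: "real n * \<delta> = t" unfolding \<delta>_def using npos by simp
    have an: "a ^ n \<le> exp (\<mu> * t)"
    proof -
      have "a \<le> exp (\<mu> * \<delta>)" unfolding a_def by (rule exp_ge_add_one_self)
      then have "a ^ n \<le> exp (\<mu> * \<delta>) ^ n" using \<mu> \<delta> unfolding a_def by (intro power_mono) auto
      also have "\<dots> = exp (real n * (\<mu> * \<delta>))" by (rule exp_of_nat_mult[symmetric])
      also have "real n * (\<mu> * \<delta>) = \<mu> * t" using nd by (simp add: algebra_simps)
      finally show ?thesis .
    qed
    have en: "l1norm M e < \<epsilon> / K" unfolding e_def using b(2)[OF \<delta>] .
    show "\<exists>w. integrable M w \<and> (AE x in M. T t f x - exp (\<mu> * t) * f x \<le> w x) \<and> l1norm M w < \<epsilon>"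
    proof (intro exI conjI)
      show "integrable M E" by (rule E(1))
      show "AE x in M. T t f x - exp (\<mu> * t) * f x \<le> E x"
        using E(2) fpos
      proof eventually_elim
        case (elim x)
        have "exp (\<mu> * t) * f x \<ge> a ^ n * f x" using an elim(2) by (rule mult_right_mono)
        then show ?case using elim(1) unfolding nd by simp
      qed
      have "l1norm M E \<le> t * a ^ n * l1norm M e" using E(3) nd by simp
      also have "\<dots> \<le> t * exp (\<mu> * t) * l1norm M e"
        using an t l1norm_nonneg[of M e] by (intro mult_right_mono mult_left_mono) auto
      also have "\<dots> \<le> t * exp (\<mu> * t) * (\<epsilon> / K)"
        using en t by (intro mult_left_mono) auto
      also have "\<dots> < K * (\<epsilon> / K)" using K \<epsilon> by (intro mult_strict_right_mono) auto
      also have "\<dots> = \<epsilon>" using K by simp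
      finally show "l1norm M E < \<epsilon>" .
    qed
  qed
  then show ?thesis by eventually_elim simp
qed



locale thm_setting =
  fixes M :: "'a measure"
    and P :: "('a \<Rightarrow> real) \<Rightarrow> ('a \<Rightarrow> real)"
    and \<phi> :: "'a \<Rightarrow> real"
    and S Pt :: "real \<Rightarrow> ('a \<Rightarrow> real) \<Rightarrow> ('a \<Rightarrow> real)"
    and K :: "('a \<Rightarrow> real) \<Rightarrow> ('a \<Rightarrow> real)"
    and fstar :: "'a \<Rightarrow> real"
  assumes sf: "sigma_finite_measure M"
    and P_stoch: "stochastic_op M P"
    and phi_meas: "\<phi> \<in> borel_measurable M"
    and phi_nonneg: "\<forall>x\<in>space M. 0 \<le> \<phi> x"
    and S_sg: "substochastic_sg M S"
    and A_dom: "\<forall>f g. has_gen M S f g \<longrightarrow> integrable M (\<lambda>x. \<phi> x * \<bar>f x\<bar>)"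
    and Pt_sg: "substochastic_sg M Pt"
    and Pt_min: "\<forall>l>0. \<forall>f. integrable M f \<longrightarrow>
        l1_lim M (\<lambda>n. resolvent M S l
                    (\<lambda>x. \<Sum>k\<le>n. (((\<lambda>u. P (\<lambda>y. \<phi> y * resolvent M S l u y)) ^^ k) f) x))
               (resolvent M Pt l f) sequentially"
    and K_def: "\<forall>f. integrable M f \<longrightarrow>
        l1_lim M (\<lambda>l. P (\<lambda>y. \<phi> y * resolvent M S l f y)) (K f) (at_right 0)"
    and fstar_dens: "is_density M fstar"
    and fstar_sub: "AE x in M. K fstar x \<le> fstar x"
begin

abbreviation R :: "real \<Rightarrow> ('a \<Rightarrow> real) \<Rightarrow> ('a \<Rightarrow> real)" where "R l \<equiv> resolvent M S l"

definition B :: "real \<Rightarrow> ('a \<Rightarrow> real) \<Rightarrow> ('a \<Rightarrow> real)" where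
  "B l u = P (\<lambda>y. \<phi> y * R l u y)"

lemma P_op: "substochastic_op M P" using P_stoch unfolding stochastic_op_def by blast

lemma fs_int: "integrable M fstar" and fs_pos: "AE x in M. 0 \<le> fstar x" and fs_one: "integral\<^sup>L M fstar = 1"
  using fstar_dens unfolding is_density_def by auto

lemma phi_ae: "AE x in M. 0 \<le> \<phi> x"
  using phi_nonneg by (intro AE_I2) auto

lemma phiR_int:
  assumes l: "l > 0" and u: "integrable M u"
  shows "integrable M (\<lambda>y. \<phi> y * R l u y)"
proof -
  have g: "has_gen M S (R l u) (\<lambda>x. l * R l u x - u x)" by (rule res_gen[OF S_sg l u])
  have ia: "integrable M (\<lambda>x. \<phi> x * \<bar>R l u x\<bar>)" using A_dom g by blast
  show ?thesis
  proof (rule Bochner_Integration.integrable_bound[OF ia])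
    show "(\<lambda>y. \<phi> y * R l u y) \<in> borel_measurable M" using phi_meas res_int[OF S_sg l u] by auto
    show "AE x in M. norm (\<phi> x * R l u x) \<le> norm (\<phi> x * \<bar>R l u x\<bar>)"
      using phi_nonneg by (intro AE_I2) (auto simp: abs_mult)
  qed
qed

lemma B_int: "l > 0 \<Longrightarrow> integrable M u \<Longrightarrow> integrable M (B l u)"
  unfolding B_def by (rule op_int[OF P_op phiR_int])

lemma B_cong:
  assumes l: "l > 0" and u: "integrable M u" and v: "integrable M v" and eq: "AE x in M. u x = v x"
  shows "AE x in M. B l u x = B l v x"
proof -
  have "AE x in M. R l u x = R l v x" by (rule res_cong[OF S_sg l u v eq])
  then have "AE x in M. \<phi> x * R l u x = \<phi> x * R l v x" by eventually_elim simp
  then show ?thesis unfolding B_def by (rule op_cong[OF P_op phiR_int[OF l u]])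
qed

lemma B_lin:
  assumes l: "l > 0" and u: "integrable M u" and v: "integrable M v"
  shows "AE x in M. B l (\<lambda>y. a * u y + b * v y) x = a * B l u x + b * B l v x"
proof -
  have uv: "integrable M (\<lambda>y. a * u y + b * v y)" using u v by auto
  have "AE x in M. R l (\<lambda>y. a * u y + b * v y) x = a * R l u x + b * R l v x"
    by (rule res_lin[OF S_sg l u v])
  then have "AE x in M. \<phi> x * R l (\<lambda>y. a * u y + b * v y) x = a * (\<phi> x * R l u x) + b * (\<phi> x * R l v x)"
    by eventually_elim (simp add: algebra_simps)
  then have "AE x in M. B l (\<lambda>y. a * u y + b * v y) x = P (\<lambda>y. a * (\<phi> y * R l u y) + b * (\<phi> y * R l v y)) x"
    unfolding B_def by (rule op_cong[OF P_op phiR_int[OF l uv]])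
  moreover have "AE x in M. P (\<lambda>y. a * (\<phi> y * R l u y) + b * (\<phi> y * R l v y)) x = a * B l u x + b * B l v x"
    unfolding B_def by (rule op_lin[OF P_op phiR_int[OF l u] phiR_int[OF l v]])
  ultimately show ?thesis by eventually_elim simp
qed

lemma B_mono:
  assumes l: "l > 0" and u: "integrable M u" and v: "integrable M v" and le: "AE x in M. u x \<le> v x"
  shows "AE x in M. B l u x \<le> B l v x"
proof -
  have "AE x in M. 0 \<le> R l (\<lambda>y. v y - u y) x"
    by (rule res_pos[OF S_sg l]) (use u v le in \<open>auto elim!: eventually_mono\<close>)
  moreover have "AE x in M. R l (\<lambda>y. 1 * v y + (-1) * u y) x = 1 * R l v x + (-1) * R l u x"
    by (rule res_lin[OF S_sg l v u])
  ultimately have "AE x in M. R l u x \<le> R l v x" by eventually_elim simp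
  then have "AE x in M. \<phi> x * R l u x \<le> \<phi> x * R l v x"
    using phi_ae by eventually_elim (auto intro: mult_left_mono)
  then show ?thesis unfolding B_def by (rule op_mono[OF P_op phiR_int[OF l u] phiR_int[OF l v]])
qed

lemma B_fs_le: assumes l: "l > 0" shows "AE x in M. B l fstar x \<le> fstar x"
proof -
  have lim: "l1_lim M (\<lambda>m. B m fstar) (K fstar) (at_right 0)"
    using K_def fs_int unfolding B_def by blast
  have ev: "\<forall>\<^sub>F m in at_right 0. AE x in M. B l fstar x \<le> B m fstar x"
  proof -
    have "\<forall>\<^sub>F m in at_right 0. 0 < m \<and> m < l" using l
      by (simp add: eventually_at_right_field) (metis dense)
    then show ?thesis
    proof eventually_elim
      case (elim m)
      then have "AE x in M. R l fstar x \<le> R m fstar x" by (intro res_mono_l[OF S_sg _ _ fs_int fs_pos]) auto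
      then have "AE x in M. \<phi> x * R l fstar x \<le> \<phi> x * R m fstar x"
        using phi_ae by eventually_elim (auto intro: mult_left_mono)
      then show ?case unfolding B_def using elim l
        by (intro op_mono[OF P_op phiR_int phiR_int]) (auto intro: fs_int)
    qed
  qed
  have "AE x in M. B l fstar x \<le> K fstar x"
    by (rule l1_lim_ge_const[OF _ lim B_int[OF l fs_int] ev]) simp
  with fstar_sub show ?thesis by eventually_elim simp
qed

lemma B_eq: "(\<lambda>u. P (\<lambda>y. \<phi> y * R l u y)) = B l"
  by (rule ext) (simp add: B_def)

lemma Bpow_int: "l > 0 \<Longrightarrow> integrable M u \<Longrightarrow> integrable M ((B l ^^ k) u)"
  by (induction k) (auto intro: B_int)

lemma BBpow_int: "l > 0 \<Longrightarrow> integrable M u \<Longrightarrow> integrable M (B l ((B l ^^ k) u))"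
  using Bpow_int[of l u "Suc k"] by simp

lemma RBBpow_int: "l > 0 \<Longrightarrow> integrable M u \<Longrightarrow> integrable M (R l (B l ((B l ^^ k) u)))"
  by (rule res_int[OF S_sg _ BBpow_int])

lemma Pt_min': "l > 0 \<Longrightarrow> integrable M f \<Longrightarrow>
   l1_lim M (\<lambda>n. R l (\<lambda>x. \<Sum>k\<le>n. ((B l ^^ k) f) x)) (resolvent M Pt l f) sequentially"
  using Pt_min unfolding B_eq by blast

context
  fixes l :: real assumes l: "l > 0"
begin

definition w :: "'a \<Rightarrow> real" where "w = (\<lambda>x. fstar x - B l fstar x)"

lemma w_int: "integrable M w" unfolding w_def using fs_int B_int[OF l fs_int] by auto

lemma w_pos: "AE x in M. 0 \<le> w x" unfolding w_def using B_fs_le[OF l] by eventually_elim simp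

lemma Bpow_w: "AE x in M. (B l ^^ k) w x = (B l ^^ k) fstar x - (B l ^^ Suc k) fstar x"
proof (induction k)
  case 0
  then show ?case by (simp add: w_def)
next
  case (Suc k)
  have I1: "integrable M ((B l ^^ k) fstar)" "integrable M ((B l ^^ Suc k) fstar)"
    using Bpow_int[OF l fs_int] by blast+
  have "AE x in M. (B l ^^ Suc k) w x = B l (\<lambda>y. 1 * (B l ^^ k) fstar y + (-1) * (B l ^^ Suc k) fstar y) x"
    using Suc unfolding funpow.simps comp_def
    by (intro B_cong[OF l Bpow_int[OF l w_int]]) (use I1 in \<open>auto elim!: eventually_mono\<close>)
  moreover have "AE x in M. B l (\<lambda>y. 1 * (B l ^^ k) fstar y + (-1) * (B l ^^ Suc k) fstar y) x
      = 1 * B l ((B l ^^ k) fstar) x + (-1) * B l ((B l ^^ Suc k) fstar) x"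
    by (rule B_lin[OF l I1])
  ultimately show ?case by eventually_elim simp
qed

lemma Bsum_w: "AE x in M. (\<Sum>k\<le>n. (B l ^^ k) w x) = fstar x - (B l ^^ Suc n) fstar x"
proof -
  have "AE x in M. \<forall>k\<in>{..n}. (B l ^^ k) w x = (B l ^^ k) fstar x - (B l ^^ Suc k) fstar x"
  proof (rule eventually_ball_finite)
    show "\<forall>k\<in>{..n}. AE x in M. (B l ^^ k) w x = (B l ^^ k) fstar x - (B l ^^ Suc k) fstar x"
      using Bpow_w by blast
  qed simp
  then show ?thesis
  proof eventually_elim
    case (elim x)
    then have "(\<Sum>k\<le>n. (B l ^^ k) w x) = (\<Sum>k\<le>n. (B l ^^ k) fstar x - (B l ^^ Suc k) fstar x)"
      by (intro sum.cong) auto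
    also have "\<dots> = fstar x - (B l ^^ Suc n) fstar x"
      using sum_telescope[of "\<lambda>k. (B l ^^ k) fstar x" n] by simp
    finally show ?case .
  qed
qed

lemma RB_tendsto: "(\<lambda>n. l1norm M (R l ((B l ^^ Suc n) fstar))) \<longlonglongrightarrow> 0"
proof -
  define q where "q n = R l (\<lambda>x. \<Sum>k\<le>n. ((B l ^^ k) fstar) x)" for n
  obtain Lf where Lf: "l1_lim M q Lf sequentially"
    using Pt_min'[OF l fs_int] unfolding q_def by blast
  have sI: "integrable M (\<lambda>x. \<Sum>k\<le>n. ((B l ^^ k) fstar) x)" for n using Bpow_int[OF l fs_int] by auto
  have qI: "integrable M (q n)" for n unfolding q_def by (rule res_int[OF S_sg l sI])
  have LI: "integrable M Lf" using l1_limD(1)[OF Lf] .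
  have diff: "AE x in M. q (Suc n) x - q n x = R l ((B l ^^ Suc n) fstar) x" for n
  proof -
    have "AE x in M. R l (\<lambda>y. 1 * (\<Sum>k\<le>n. ((B l ^^ k) fstar) y) + 1 * (B l ^^ Suc n) fstar y) x
       = 1 * q n x + 1 * R l ((B l ^^ Suc n) fstar) x"
      unfolding q_def by (rule res_lin[OF S_sg l sI Bpow_int[OF l fs_int]])
    moreover have "(\<lambda>y. 1 * (\<Sum>k\<le>n. ((B l ^^ k) fstar) y) + 1 * (B l ^^ Suc n) fstar y) = (\<lambda>x. \<Sum>k\<le>Suc n. ((B l ^^ k) fstar) x)"
      by (simp add: add.commute)
    ultimately show ?thesis unfolding q_def by (auto elim!: eventually_mono)
  qed
  have eqn: "l1norm M (R l ((B l ^^ Suc n) fstar)) = l1norm M (\<lambda>x. q (Suc n) x - q n x)" for n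
    using diff[of n] qI RBBpow_int[OF l fs_int]
    by (intro l1norm_cong) (auto elim!: eventually_mono)
  have lim: "(\<lambda>n. l1norm M (\<lambda>x. q n x - Lf x)) \<longlonglongrightarrow> 0" using l1_limD(3)[OF Lf] .
  have "(\<lambda>n. l1norm M (\<lambda>x. q (Suc n) x - q n x)) \<longlonglongrightarrow> 0"
  proof (rule tendsto_sandwich[OF _ _ tendsto_const])
    show "\<forall>\<^sub>F n in sequentially. 0 \<le> l1norm M (\<lambda>x. q (Suc n) x - q n x)" by (simp add: l1norm_nonneg)
    show "\<forall>\<^sub>F n in sequentially. l1norm M (\<lambda>x. q (Suc n) x - q n x)
        \<le> l1norm M (\<lambda>x. q (Suc n) x - Lf x) + l1norm M (\<lambda>x. q n x - Lf x)"
      using l1norm_triangle3[OF qI LI qI] l1norm_minus_commute[of M Lf] by (auto intro!: always_eventually)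
    show "(\<lambda>n. l1norm M (\<lambda>x. q (Suc n) x - Lf x) + l1norm M (\<lambda>x. q n x - Lf x)) \<longlonglongrightarrow> 0"
      using tendsto_add[OF LIMSEQ_Suc[OF lim] lim] by simp
  qed
  then show ?thesis unfolding eqn .
qed

lemma Pt_res_w: "AE x in M. resolvent M Pt l w x = R l fstar x"
proof -
  define s where "s n = R l (\<lambda>x. \<Sum>k\<le>n. (B l ^^ k) w x)" for n
  have lim1: "l1_lim M s (resolvent M Pt l w) sequentially"
    using Pt_min'[OF l w_int] unfolding s_def .
  have sI: "integrable M (\<lambda>x. \<Sum>k\<le>n. (B l ^^ k) w x)" for n using Bpow_int[OF l w_int] by auto
  have RfI: "integrable M (R l fstar)" by (rule res_int[OF S_sg l fs_int])
  have RbI: "integrable M (R l ((B l ^^ Suc n) fstar))" for n by (rule res_int[OF S_sg l Bpow_int[OF l fs_int]])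
  have seq: "AE x in M. s n x = R l fstar x - R l ((B l ^^ Suc n) fstar) x" for n
  proof -
    have "AE x in M. s n x = R l (\<lambda>y. 1 * fstar y + (-1) * (B l ^^ Suc n) fstar y) x"
      unfolding s_def by (rule res_cong[OF S_sg l sI]) (use Bsum_w[of n] fs_int BBpow_int[OF l fs_int] in \<open>auto elim!: eventually_mono\<close>)
    moreover have "AE x in M. R l (\<lambda>y. 1 * fstar y + (-1) * (B l ^^ Suc n) fstar y) x
        = 1 * R l fstar x + (-1) * R l ((B l ^^ Suc n) fstar) x"
      by (rule res_lin[OF S_sg l fs_int Bpow_int[OF l fs_int]])
    ultimately show ?thesis by eventually_elim simp
  qed
  have lim2: "l1_lim M s (R l fstar) sequentially"
  proof (rule l1_limI[OF RfI])
    show "\<forall>\<^sub>F n in sequentially. integrable M (s n)" unfolding s_def using res_int[OF S_sg l sI] by simp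
    have "l1norm M (\<lambda>x. s n x - R l fstar x) = l1norm M (R l ((B l ^^ Suc n) fstar))" for n
    proof -
      have "l1norm M (\<lambda>x. s n x - R l fstar x) = l1norm M (\<lambda>x. - R l ((B l ^^ Suc n) fstar) x)"
        using seq[of n] res_int[OF S_sg l sI] RfI RbI unfolding s_def
        by (intro l1norm_cong) (auto elim!: eventually_mono)
      also have "\<dots> = l1norm M (R l ((B l ^^ Suc n) fstar))" unfolding l1norm_def by simp
      finally show ?thesis .
    qed
    then show "(\<lambda>n. l1norm M (\<lambda>x. s n x - R l fstar x)) \<longlonglongrightarrow> 0" using RB_tendsto by simp
  qed
  show ?thesis by (rule l1_lim_unique[OF _ lim1 lim2]) simp
qed

lemma Pt_gen: "has_gen M Pt (R l fstar) (\<lambda>x. l * R l fstar x - w x)"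
proof -
  have g: "has_gen M Pt (resolvent M Pt l w) (\<lambda>x. l * resolvent M Pt l w x - w x)"
    by (rule res_gen[OF Pt_sg l w_int])
  show ?thesis
    by (rule has_gen_cong[OF Pt_sg g]) (use Pt_res_w res_int[OF S_sg l fs_int] w_int in \<open>auto elim!: eventually_mono\<close>)
qed

lemma Pt_exp: "0 \<le> t \<Longrightarrow> AE x in M. Pt t (R l fstar) x \<le> exp (l * t) * R l fstar x"
  by (rule exp_bound[OF Pt_sg Pt_gen res_pos[OF S_sg l fs_int fs_pos]])
     (use w_pos l in \<open>auto elim!: eventually_mono\<close>)


end

definition lam :: "nat \<Rightarrow> real" where "lam n = 1 / real (Suc n)"
definition fl :: "nat \<Rightarrow> 'a \<Rightarrow> real" where "fl n = R (lam n) fstar"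

lemma lam_pos: "0 < lam n" unfolding lam_def by simp

lemma fl_int: "integrable M (fl n)" unfolding fl_def by (rule res_int[OF S_sg lam_pos fs_int])

lemma fl_pos: "AE x in M. 0 \<le> fl n x" unfolding fl_def by (rule res_pos[OF S_sg lam_pos fs_int fs_pos])

lemma fl_mono: "AE x in M. fl n x \<le> fl (Suc n) x"
  unfolding fl_def by (rule res_mono_l[OF S_sg lam_pos _ fs_int fs_pos]) (simp add: lam_def frac_less2)

lemma fl_exp: "0 \<le> t \<Longrightarrow> AE x in M. Pt t (fl n) x \<le> exp (lam n * t) * fl n x"
  unfolding fl_def by (rule Pt_exp[OF lam_pos])

lemma fl_all: "AE x in M. \<forall>n. 0 \<le> fl n x \<and> fl n x \<le> fl (Suc n) x"
  using fl_pos fl_mono by (simp add: AE_all_countable)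

lemma lam_lim: "lam \<longlonglongrightarrow> 0"
  unfolding lam_def using LIMSEQ_Suc[OF lim_inverse_n'] by simp

definition bar :: "'a \<Rightarrow> ennreal" where "bar = resolvent_sup M S fstar"

lemma bar_eq: "bar x = (SUP n. ennreal (fl n x))"
  unfolding bar_def resolvent_sup_def fl_def lam_def by simp

lemma bar_meas: "bar \<in> borel_measurable M"
proof -
  have "(\<lambda>x. SUP n. ennreal (fl n x)) \<in> borel_measurable M"
    using fl_int by measurable
  moreover have "bar = (\<lambda>x. SUP n. ennreal (fl n x))" by (rule ext) (rule bar_eq)
  ultimately show ?thesis by simp
qed

lemma key_sub:
  assumes Q: "integrable M Q" and Fpos: "AE x in M. 0 \<le> Q x" and Fle: "AE x in M. ennreal (Q x) \<le> bar x"
    and t: "0 \<le> t"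
  shows "AE x in M. ennreal (Pt t Q x) \<le> bar x"
proof -
  define h where "h k = (\<lambda>x. min (Q x) (fl k x))" for k
  have hI: "integrable M (h k)" for k unfolding h_def using Q fl_int by auto
  have conv: "AE x in M. (\<lambda>k. h k x) \<longlonglongrightarrow> Q x"
    using fl_all Fpos Fle
  proof eventually_elim
    case (elim x)
    define m where "m k = h k x" for k
    have inc: "incseq m" unfolding incseq_Suc_iff
    proof
      fix n
      have "fl n x \<le> fl (Suc n) x" using elim(1) by blast
      then show "m n \<le> m (Suc n)" unfolding m_def h_def by (rule min.mono[OF order.refl])
    qed
    have bdd: "bdd_above (range m)" unfolding m_def h_def by (auto intro!: bdd_aboveI[of _ "Q x"])
    have lim: "m \<longlonglongrightarrow> (SUP k. m k)" by (rule LIMSEQ_incseq_SUP[OF bdd inc])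
    have le: "(SUP k. m k) \<le> Q x" unfolding m_def h_def by (rule cSUP_least) auto
    have ge: "Q x \<le> (SUP k. m k)"
    proof (rule ccontr)
      assume "\<not> Q x \<le> (SUP k. m k)"
      then have lt: "(SUP k. m k) < Q x" by simp
      have m0: "0 \<le> m 0" unfolding m_def h_def using elim by simp
      have S0: "0 \<le> (SUP k. m k)" using m0 cSUP_upper[OF _ bdd, of 0] by auto
      have "fl k x \<le> (SUP k. m k)" for k
      proof -
        have "m k \<le> (SUP k. m k)" by (rule cSUP_upper[OF _ bdd]) simp
        with lt show ?thesis unfolding m_def h_def by (auto simp: min_def split: if_splits)
      qed
      then have "bar x \<le> ennreal (SUP k. m k)" unfolding bar_eq by (intro SUP_least ennreal_leI) auto
      also have "\<dots> < ennreal (Q x)" using lt S0 by (simp add: ennreal_less_iff)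
      finally show False using elim(3) by simp
    qed
    show ?case using lim le ge unfolding m_def by simp
  qed
  have hF: "l1_lim M h Q sequentially"
  proof (rule l1_limI[OF Q])
    show "\<forall>\<^sub>F k in sequentially. integrable M (h k)" using hI by simp
    have "(\<lambda>k. LINT x|M. \<bar>h k x - Q x\<bar>) \<longlonglongrightarrow> (LINT x|M. 0)"
    proof (rule integral_dominated_convergence[where w="\<lambda>x. \<bar>Q x\<bar>"])
      show "(\<lambda>x. 0::real) \<in> borel_measurable M" by simp
      show "(\<lambda>x. \<bar>h k x - Q x\<bar>) \<in> borel_measurable M" for k using hI Q by auto
      show "integrable M (\<lambda>x. \<bar>Q x\<bar>)" using Q by simp
      show "AE x in M. (\<lambda>k. \<bar>h k x - Q x\<bar>) \<longlonglongrightarrow> 0" using conv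
      proof eventually_elim
        case (elim x)
        then have "(\<lambda>k. \<bar>h k x - Q x\<bar>) \<longlonglongrightarrow> \<bar>Q x - Q x\<bar>" by (intro tendsto_intros)
        then show ?case by simp
      qed
      show "AE x in M. norm \<bar>h k x - Q x\<bar> \<le> \<bar>Q x\<bar>" for k using fl_pos[of k] Fpos
        by eventually_elim (auto simp: h_def min_def)
    qed
    then show "(\<lambda>k. l1norm M (\<lambda>x. h k x - Q x)) \<longlonglongrightarrow> 0" unfolding l1norm_def by simp
  qed
  have t0: "0 \<le> t" by (rule t)
  have PhF: "l1_lim M (\<lambda>k. Pt t (h k)) (Pt t Q) sequentially" by (rule op_l1_lim[OF sg_op[OF Pt_sg t0] hF])
  obtain r where r: "strict_mono r" "AE x in M. (\<lambda>j. Pt t (h (r j)) x) \<longlonglongrightarrow> Pt t Q x"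
    using l1_lim_subseq[OF PhF sg_int[OF Pt_sg t0 hI]] by blast
  have bnd: "AE x in M. \<forall>k. Pt t (h k) x \<le> exp (lam k * t) * fl k x"
  proof (subst AE_all_countable, intro allI)
    fix k
    have "AE x in M. Pt t (h k) x \<le> Pt t (fl k) x"
      by (rule op_mono[OF sg_op[OF Pt_sg t0] hI fl_int]) (simp add: h_def)
    with fl_exp[OF t0, of k] show "AE x in M. Pt t (h k) x \<le> exp (lam k * t) * fl k x"
      by eventually_elim simp
  qed
  from r(2) bnd fl_all show ?thesis
  proof eventually_elim
    case (elim x)
    show ?case
    proof (cases "bar x = \<infinity>")
      case True then show ?thesis by simp
    next
      case False
      define b where "b = enn2real (bar x)"
      have bx: "bar x = ennreal b" unfolding b_def using False by (simp add: less_top)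
      have b0: "0 \<le> b" unfolding b_def by simp
      have flb: "fl k x \<le> b" for k
      proof -
        have "ennreal (fl k x) \<le> bar x" unfolding bar_eq by (rule SUP_upper) simp
        then show ?thesis using bx b0 elim(3) by simp
      qed
      have "Pt t Q x \<le> exp (0 * t) * b"
      proof (rule LIMSEQ_le[OF elim(1)])
        show "(\<lambda>j. exp (lam (r j) * t) * b) \<longlonglongrightarrow> exp (0 * t) * b"
          using LIMSEQ_subseq_LIMSEQ[OF lam_lim r(1)] by (intro tendsto_intros) (simp add: comp_def)
        show "\<exists>N. \<forall>n\<ge>N. Pt t (h (r n)) x \<le> exp (lam (r n) * t) * b"
        proof (intro exI allI impI)
          fix n :: nat
          have "Pt t (h (r n)) x \<le> exp (lam (r n) * t) * fl (r n) x" using elim(2) by blast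
          also have "\<dots> \<le> exp (lam (r n) * t) * b" using flb[of "r n"] by (intro mult_left_mono) auto
          finally show "Pt t (h (r n)) x \<le> exp (lam (r n) * t) * b" .
        qed
      qed
      then show ?thesis using bx b0 by simp
    qed
  qed
qed

end


lemma approx_exists:
  assumes sfm: "sigma_finite_measure M" and f: "f \<in> borel_measurable M"
  shows "\<exists>fn. approx_seq M f fn"
proof -
  interpret sigma_finite_measure M by (rule sfm)
  obtain A :: "nat \<Rightarrow> 'a set" where A: "range A \<subseteq> sets M" "(\<Union>i. A i) = space M"
    "\<And>i. emeasure M (A i) \<noteq> \<infinity>" "incseq A"
    using sigma_finite_incseq by blast
  define fn where "fn n x = indicator (A n) x * enn2real (min (of_nat n) (f x))" for n x
  have AS: "A n \<in> sets M" for n using A(1) by auto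
  have mn: "min (of_nat n) (f x) < top" for n x
    using min.cobounded1[of "of_nat n" "f x"] of_nat_less_top[of n] by (rule le_less_trans)
  have e_le: "enn2real (min (of_nat n) (f x)) \<le> real n" for n x
    by (rule enn2real_leI) (auto simp: min.coboundedI1)
  have intf: "integrable M (fn n)" for n
  proof (rule Bochner_Integration.integrable_bound[of _ "\<lambda>x. real n * indicator (A n) x"])
    show "integrable M (\<lambda>x. real n * indicator (A n) x :: real)"
      using AS A(3) by (intro integrable_mult_right integrable_real_indicator) (auto simp: less_top)
    show "fn n \<in> borel_measurable M" unfolding fn_def using AS f by measurable
    show "AE x in M. norm (fn n x) \<le> norm (real n * indicator (A n) x :: real)"
      using e_le by (intro AE_I2) (auto simp: fn_def indicator_def)
  qed
  have nonneg: "0 \<le> fn n x" for n x unfolding fn_def by simp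
  have mono: "fn n x \<le> fn (Suc n) x" for n x
  proof -
    have i: "indicator (A n) x \<le> (indicator (A (Suc n)) x :: real)"
      using A(4) by (auto simp: indicator_def incseq_Suc_iff)
    have "enn2real (min (of_nat n) (f x)) \<le> enn2real (min (of_nat (Suc n)) (f x))"
    proof (rule enn2real_mono[OF _ mn])
      have "(of_nat n :: ennreal) \<le> of_nat (Suc n)" by (rule of_nat_mono) simp
      then show "min (of_nat n) (f x) \<le> min (of_nat (Suc n)) (f x)" by (rule min.mono) simp
    qed
    then show ?thesis unfolding fn_def using i by (intro mult_mono) auto
  qed
  have sup: "(SUP n. ennreal (fn n x)) = f x" if x: "x \<in> space M" for x
  proof (rule antisym)
    show "(SUP n. ennreal (fn n x)) \<le> f x"
    proof (rule SUP_least)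
      fix n
      have "ennreal (fn n x) \<le> ennreal (enn2real (min (of_nat n) (f x)))"
        unfolding fn_def by (intro ennreal_leI) (auto simp: indicator_def)
      also have "\<dots> = min (of_nat n) (f x)" using mn by simp
      also have "\<dots> \<le> f x" by simp
      finally show "ennreal (fn n x) \<le> f x" .
    qed
    obtain N where N: "x \<in> A N" using x A(2) by auto
    show "f x \<le> (SUP n. ennreal (fn n x))"
    proof (subst le_SUP_iff, intro allI impI)
      fix y assume y: "y < f x"
      then have "y < top" using top.not_eq_extremum by fastforce
      then obtain m where m: "y < of_nat m" using ennreal_Ex_less_of_nat by blast
      define n where "n = max m N"
      have xn: "x \<in> A n" using N A(4)[unfolded incseq_def, rule_format, of N n] unfolding n_def by auto
      have "y < of_nat n" using m unfolding n_def by (rule less_le_trans) simp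
      then have "y < min (of_nat n) (f x)" using y by simp
      also have "min (of_nat n) (f x) = ennreal (fn n x)" unfolding fn_def using xn mn by simp
      finally show "\<exists>i\<in>UNIV. y < ennreal (fn i x)" by blast
    qed
  qed
  have "approx_seq M f fn"
    unfolding approx_seq_def using intf nonneg mono sup by (auto intro!: AE_I2)
  then show ?thesis by blast
qed

context thm_setting
begin

lemma first_conj: "subinvariant_sg M Pt bar"
  unfolding subinvariant_sg_def
proof (intro allI impI)
  fix t :: real assume t: "0 \<le> t"
  define fn where "fn = (SOME fn. approx_seq M bar fn)"
  have ap: "approx_seq M bar fn" unfolding fn_def using approx_exists[OF sf bar_meas] by (rule someI_ex)
  have fnI: "integrable M (fn n)" and fn0: "\<And>x. x \<in> space M \<Longrightarrow> 0 \<le> fn n x" for n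
    using ap unfolding approx_seq_def by auto
  have fsup: "AE x in M. (SUP n. ennreal (fn n x)) = bar x" using ap unfolding approx_seq_def by auto
  have "AE x in M. \<forall>n. ennreal (Pt t (fn n) x) \<le> bar x"
  proof (subst AE_all_countable, intro allI)
    fix n
    show "AE x in M. ennreal (Pt t (fn n) x) \<le> bar x"
    proof (rule key_sub[OF fnI _ _ t])
      show "AE x in M. 0 \<le> fn n x" using fn0 by (intro AE_I2) auto
      show "AE x in M. ennreal (fn n x) \<le> bar x" using fsup
      proof eventually_elim
        case (elim x)
        have "ennreal (fn n x) \<le> (SUP n. ennreal (fn n x))" by (rule SUP_upper) simp
        then show ?case using elim by simp
      qed
    qed
  qed
  then show "AE x in M. ext_op M (Pt t) bar x \<le> bar x"
    unfolding ext_op_def fn_def[symmetric] by eventually_elim (rule SUP_least, blast)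
qed


lemma second_conj:
  assumes fin: "(\<integral>\<^sup>+ x. bar x \<partial>M) < \<infinity>" and st: "stochastic_sg M Pt"
  shows "\<exists>g. is_density M g \<and> (\<forall>t\<ge>0. AE x in M. Pt t g x = g x)"
proof -
  define G where "G x = enn2real (bar x)" for x
  have aefin: "AE x in M. bar x < \<infinity>"
    by (rule finite_nn_integral_imp_ae_finite[OF bar_meas fin])
  have G0: "0 \<le> G x" for x unfolding G_def by simp
  have GAE: "AE x in M. ennreal (G x) = bar x" using aefin unfolding G_def by eventually_elim simp
  have GI: "integrable M G"
  proof (subst integrable_iff_bounded, intro conjI)
    show "G \<in> borel_measurable M" unfolding G_def using bar_meas by measurable
    have "(\<integral>\<^sup>+ x. ennreal (norm (G x)) \<partial>M) \<le> (\<integral>\<^sup>+ x. bar x \<partial>M)"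
    proof (rule nn_integral_mono)
      fix x
      show "ennreal (norm (G x)) \<le> bar x"
        unfolding G_def by (cases "bar x = top") (auto simp: less_top)
    qed
    then show "(\<integral>\<^sup>+ x. ennreal (norm (G x)) \<partial>M) < \<infinity>" using fin by (rule le_less_trans)
  qed
  have sub: "AE x in M. Pt t G x \<le> G x" if t: "0 \<le> t" for t
  proof -
    have "AE x in M. ennreal (Pt t G x) \<le> bar x"
      by (rule key_sub[OF GI _ _ t]) (use G0 GAE in \<open>auto elim!: eventually_mono\<close>)
    with GAE show ?thesis
    proof eventually_elim
      case (elim x)
      then have "ennreal (Pt t G x) \<le> ennreal (G x)" by simp
      then show ?case using G0[of x] by simp
    qed
  qed
  define c where "c = integral\<^sup>L M G"
  have c0: "0 \<le> c" unfolding c_def using G0 by simp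
  have cpos: "0 < c"
  proof (rule ccontr)
    assume "\<not> 0 < c"
    then have "c = 0" using c0 by simp
    then have "AE x in M. G x = 0" unfolding c_def using GI G0 integral_nonneg_eq_0_iff_AE[of M G] by simp
    with GAE have "AE x in M. bar x = 0" by eventually_elim simp
    then have "AE x in M. fl 0 x \<le> 0"
    proof eventually_elim
      case (elim x)
      have "ennreal (fl 0 x) \<le> bar x" unfolding bar_eq by (rule SUP_upper) simp
      then show ?case using elim by (simp add: ennreal_le_iff2 ennreal_eq_0_iff)
    qed
    with fl_pos[of 0] have "AE x in M. resolvent M S (lam 0) fstar x = 0" unfolding fl_def by eventually_elim simp
    then have "AE x in M. fstar x = 0" by (rule res_zero_imp[OF S_sg lam_pos fs_int])
    then have "integral\<^sup>L M fstar = 0" by (simp add: integral_eq_zero_AE)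
    then show False using fs_one by simp
  qed
  define g where "g x = G x / c" for x
  have gI: "integrable M g" unfolding g_def using GI by simp
  have g0: "0 \<le> g x" for x unfolding g_def using G0 c0 by simp
  have gint: "integral\<^sup>L M g = 1" unfolding g_def c_def using cpos unfolding c_def by simp
  have gd: "is_density M g" unfolding is_density_def using gI g0 gint by auto
  have "AE x in M. Pt t g x = g x" if t: "0 \<le> t" for t
  proof -
    have so: "stochastic_op M (Pt t)" using st t unfolding stochastic_sg_def by blast
    have d2: "is_density M (Pt t g)" using so gd unfolding stochastic_op_def by blast
    have opt: "substochastic_op M (Pt t)" by (rule sg_op[OF Pt_sg t])
    have "AE x in M. Pt t (\<lambda>y. (1 / c) * G y) x = (1 / c) * Pt t G x" by (rule op_scale[OF opt GI])
    moreover have "(\<lambda>y. (1 / c) * G y) = g" unfolding g_def by (rule ext) simp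
    ultimately have sc: "AE x in M. Pt t g x = (1 / c) * Pt t G x" by simp
    have le: "AE x in M. Pt t g x \<le> g x" using sc sub[OF t]
      by eventually_elim (use cpos in \<open>simp add: g_def divide_right_mono\<close>)
    have PI: "integrable M (Pt t g)" using d2 unfolding is_density_def by simp
    have "integral\<^sup>L M (\<lambda>x. g x - Pt t g x) = 0"
      using d2 gint gI PI unfolding is_density_def by simp
    moreover have "AE x in M. 0 \<le> g x - Pt t g x" using le by eventually_elim simp
    ultimately have "AE x in M. g x - Pt t g x = 0"
      using integral_nonneg_eq_0_iff_AE[of M "\<lambda>x. g x - Pt t g x"] gI PI by simp
    then show ?thesis by eventually_elim simp
  qed
  with gd show ?thesis by blast
qed

end


theorem theorem3p2:
  fixes M :: "'a measure"
    and P :: "('a \<Rightarrow> real) \<Rightarrow> ('a \<Rightarrow> real)"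
    and \<phi> :: "'a \<Rightarrow> real"
    and S Pt :: "real \<Rightarrow> ('a \<Rightarrow> real) \<Rightarrow> ('a \<Rightarrow> real)"
    and K :: "('a \<Rightarrow> real) \<Rightarrow> ('a \<Rightarrow> real)"
    and fstar :: "'a \<Rightarrow> real"
  assumes sf: "sigma_finite_measure M"
    and P_stoch: "stochastic_op M P"
    and phi_meas: "\<phi> \<in> borel_measurable M"
    and phi_nonneg: "\<forall>x\<in>space M. 0 \<le> \<phi> x"
    and S_sg: "substochastic_sg M S"
    and A_dom: "\<forall>f g. has_gen M S f g \<longrightarrow> integrable M (\<lambda>x. \<phi> x * \<bar>f x\<bar>)"
    and A_int: "\<forall>f g. has_gen M S f g \<longrightarrow> (AE x in M. 0 \<le> f x) \<longrightarrow>
                  integral\<^sup>L M g = - integral\<^sup>L M (\<lambda>x. \<phi> x * f x)"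
    and Pt_sg: "substochastic_sg M Pt"
    and Pt_min: "\<forall>l>0. \<forall>f. integrable M f \<longrightarrow>
        l1_lim M (\<lambda>n. resolvent M S l
                    (\<lambda>x. \<Sum>k\<le>n. (((\<lambda>u. P (\<lambda>y. \<phi> y * resolvent M S l u y)) ^^ k) f) x))
               (resolvent M Pt l f) sequentially"
    and K_def: "\<forall>f. integrable M f \<longrightarrow>
        l1_lim M (\<lambda>l. P (\<lambda>y. \<phi> y * resolvent M S l f y)) (K f) (at_right 0)"
    and fstar_dens: "is_density M fstar"
    and fstar_sub: "AE x in M. K fstar x \<le> fstar x"
  shows "subinvariant_sg M Pt (resolvent_sup M S fstar) \<and>
         ((\<integral>\<^sup>+ x. resolvent_sup M S fstar x \<partial>M) < \<infinity> \<longrightarrow> stochastic_sg M Pt \<longrightarrow>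
            (\<exists>g. is_density M g \<and> (\<forall>t\<ge>0. AE x in M. Pt t g x = g x)))"
proof -
  interpret thm_setting M P \<phi> S Pt K fstar
    by (rule thm_setting.intro[OF sf P_stoch phi_meas phi_nonneg S_sg A_dom Pt_sg Pt_min K_def fstar_dens fstar_sub])
  show ?thesis using first_conj second_conj unfolding bar_def by blast
qed

end
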